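(* Let $R_0^*\in SO(3)$ with unit quaternion representation $w_0^*$, let $2\le k^*\le\ell$, let $(y_i,x_i)$ satisfy $y_i=R_0^*x_i+\epsilon_i$ for $i=1,\dots,k^*$ (noisy inliers, $\epsilon_i\in\mathbb{R}^3$), with $(y_j,x_j)$ arbitrary for $j>k^*$ (outliers), let $c_1^2,\dots,c_\ell^2\ge0$, and let $\hat w_0$ be a global minimizer of (TLS-Q). Define $$\zeta_{\mathrm{in}}:=\frac{\lambda_{\min2}\big(\sum_{i=1}^{k^*}Q_i\big)}{\lambda_{\min}\big(\sum_{i=1}^{k^*}Q_i\big)}.$$ Assume (1) $\zeta_{\mathrm{in}}\ge k^*/(k^*-1)$; (2) $0<c_j^2<\lambda_{\min}(Q_j)$ for every $j=k^*+1,\dots,\ell$; (3) for every $i=1,\dots,k^*$, $$c_i^2>\hat w_0^\top Q_i\hat w_0+\|Q_i\hat w_0\|_2+\frac{|d_i|+d_i}{2},\quad d_i:=\frac{\sum_{k=1}^{k^*}\hat w_0^\top Q_k\hat w_0}{k^*}-\hat w_0^\top Q_i\hat w_0+\frac{\lambda_{\max}\big(\sum_{j\in\{1,\dots,k^*\}\setminus\{i\}}(Q_i-Q_j)\big)}{\zeta_{\mathrm{in}}(k^*-1)}.$$ Then (SDR) is tight, and $$\sin^2(\hat\tau_0^* ):=1-(\hat w_0^\top w_0^* )^2\le\frac{4\sum_{i=1}^{k^*}\|\epsilon_i\|_2\|x_i\|_2}{\lambda_{\min2}\big(\sum_{i=1}^{k^*}P_i\big)}.$$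
   Context: For $w=[w_1;w_2;w_3;w_4]\in\mathbb{S}^3$, $R(w)=\begin{bmatrix} w_1^2+w_2^2-w_3^2-w_4^2 & 2(w_2w_3-w_1w_4) & 2(w_2w_4+w_1w_3)\\ 2(w_2w_3+w_1w_4) & w_1^2+w_3^2-w_2^2-w_4^2 & 2(w_3w_4-w_1w_2)\\ 2(w_2w_4-w_1w_3) & 2(w_3w_4+w_1w_2) & w_1^2+w_4^2-w_2^2-w_3^2\end{bmatrix}\in SO(3)$; $\pm w$ are the unit quaternion representations of $R(w)$. $Q_i$ is the unique symmetric $4\times4$ matrix with $w^\top Q_iw=\|y_i-R(w)x_i\|_2^2$ for all $w\in\mathbb{S}^3$; for inliers, $P_i$ is the unique symmetric $4\times4$ matrix with $w^\top P_iw=\|R_0^*x_i-R(w)x_i\|_2^2$ for all $w\in\mathbb{S}^3$. $\lambda_{\min},\lambda_{\min2},\lambda_{\max}$: smallest, second smallest (with multiplicity), largest eigenvalue. (TLS-Q) is $\min_{w_0\in\mathbb{S}^3}\sum_{i=1}^\ell\min\{w_0^\top Q_iw_0,c_i^2\}$. For $\mathcal{A}\in\mathbb{R}^{4(\ell+1)\times4(\ell+1)}$, $[\mathcal{A}]_{ij}$ ($0\le i,j\le\ell$) is the $4\times4$ block in rows $4i+1..4i+4$, columns $4j+1..4j+4$. $\mathcal{Q}$ is symmetric with $[\mathcal{Q}]_{0i}=[\mathcal{Q}]_{i0}=\frac12(Q_i-c_i^2I_4)$ ($i\ge1$), other blocks zero. (QCQP): minimize $\operatorname{tr}(\mathcal{Q}\omega\omega^\top)+\sum_ic_i^2$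 over $\omega\in\mathbb{R}^{4(\ell+1)}$ s.t. $[\omega\omega^\top]_{0i}=[\omega\omega^\top]_{ii}$ ($i=1..\ell$), $\operatorname{tr}([\omega\omega^\top]_{00})=1$. (SDR): same objective with $\omega\omega^\top$ replaced by symmetric $\mathcal{W}\succeq0$ and the same constraints on $\mathcal{W}$. (SDR) is tight if it admits $\hat\omega\hat\omega^\top$ as a global minimizer, where $\hat\omega$ is a global minimizer of (QCQP). *)

theory Defs
  imports "Jordan_Normal_Form.Matrix" "Jordan_Normal_Form.Char_Poly"
    "HOL-Computational_Algebra.Polynomial"
begin

text \<open>Vectors/matrices are Jordan_Normal_Form vec/mat; quaternions are 4-vectors
  indexed 0..3, i.e. w_1 = w $ 0, ..., w_4 = w $ 3.\<close>

definition vnorm :: "real vec \<Rightarrow> real" where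
  "vnorm v = sqrt (v \<bullet> v)"

definition unit_quat :: "real vec \<Rightarrow> bool" where
  "unit_quat w \<longleftrightarrow> w \<in> carrier_vec 4 \<and> w \<bullet> w = 1"

definition rotR :: "real vec \<Rightarrow> real mat" where
  "rotR w = (let w1 = w $ 0; w2 = w $ 1; w3 = w $ 2; w4 = w $ 3 in
     mat_of_rows_list 3
      [[w1^2 + w2^2 - w3^2 - w4^2, 2*(w2*w3 - w1*w4), 2*(w2*w4 + w1*w3)],
       [2*(w2*w3 + w1*w4), w1^2 + w3^2 - w2^2 - w4^2, 2*(w3*w4 - w1*w2)],
       [2*(w2*w4 - w1*w3), 2*(w3*w4 + w1*w2), w1^2 + w4^2 - w2^2 - w3^2]])"

definition SO3 :: "real mat set" where
  "SO3 = {R. R \<in> carrier_mat 3 3 \<and> transpose_mat R * R = 1\<^sub>m 3 \<and> det R = 1}"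

definition Qmat :: "real vec \<Rightarrow> real vec \<Rightarrow> real mat" where
  "Qmat y x = (THE Q. Q \<in> carrier_mat 4 4 \<and> transpose_mat Q = Q \<and>
      (\<forall>w. unit_quat w \<longrightarrow> w \<bullet> (Q *\<^sub>v w) = (vnorm (y - rotR w *\<^sub>v x))\<^sup>2))"

definition Pmat :: "real mat \<Rightarrow> real vec \<Rightarrow> real mat" where
  "Pmat R0 x = (THE P. P \<in> carrier_mat 4 4 \<and> transpose_mat P = P \<and>
      (\<forall>w. unit_quat w \<longrightarrow> w \<bullet> (P *\<^sub>v w) = (vnorm (R0 *\<^sub>v x - rotR w *\<^sub>v x))\<^sup>2))"

text \<open>Eigenvalues with multiplicity, in increasing order: the roots of the characteristic
  polynomial (for the real symmetric matrices used here all eigenvalues are real).\<close>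
definition eigs :: "real mat \<Rightarrow> real list" where
  "eigs A = sorted_list_of_multiset (proots (char_poly A))"

definition lam_min :: "real mat \<Rightarrow> real" where "lam_min A = eigs A ! 0"
definition lam_min2 :: "real mat \<Rightarrow> real" where "lam_min2 A = eigs A ! 1"
definition lam_max :: "real mat \<Rightarrow> real" where "lam_max A = last (eigs A)"

definition msum4 :: "(nat \<Rightarrow> real mat) \<Rightarrow> nat set \<Rightarrow> real mat" where
  "msum4 f I = mat 4 4 (\<lambda>(a,b). \<Sum>i\<in>I. f i $$ (a,b))"

definition mtrace :: "real mat \<Rightarrow> real" where
  "mtrace A = (\<Sum>i<dim_row A. A $$ (i,i))"

definition outer :: "real vec \<Rightarrow> real mat" where
  "outer v = mat (dim_vec v) (dim_vec v) (\<lambda>(i,j). v $ i * v $ j)"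

definition psd :: "real mat \<Rightarrow> bool" where
  "psd A \<longleftrightarrow> (\<forall>v \<in> carrier_vec (dim_row A). 0 \<le> v \<bullet> (A *\<^sub>v v))"

text \<open>[A]_{ij}: the 4x4 block in rows 4i+1..4i+4, columns 4j+1..4j+4 (0-based here).\<close>
definition blk :: "real mat \<Rightarrow> nat \<Rightarrow> nat \<Rightarrow> real mat" where
  "blk A i j = mat 4 4 (\<lambda>(a,b). A $$ (4*i+a, 4*j+b))"

definition bigQ :: "nat \<Rightarrow> (nat \<Rightarrow> real mat) \<Rightarrow> (nat \<Rightarrow> real) \<Rightarrow> real mat" where
  "bigQ l Q csq = mat (4*(l+1)) (4*(l+1)) (\<lambda>(r,s).
     let i = r div 4; j = s div 4; a = r mod 4; b = s mod 4 in
     if i = 0 \<and> 1 \<le> j then (1/2) * (Q j - csq j \<cdot>\<^sub>m 1\<^sub>m 4) $$ (a,b)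
     else if j = 0 \<and> 1 \<le> i then (1/2) * (Q i - csq i \<cdot>\<^sub>m 1\<^sub>m 4) $$ (a,b)
     else 0)"

definition relax_obj :: "nat \<Rightarrow> (nat \<Rightarrow> real mat) \<Rightarrow> (nat \<Rightarrow> real) \<Rightarrow> real mat \<Rightarrow> real" where
  "relax_obj l Q csq W = mtrace (bigQ l Q csq * W) + (\<Sum>i=1..l. csq i)"

definition relax_constr :: "nat \<Rightarrow> real mat \<Rightarrow> bool" where
  "relax_constr l W \<longleftrightarrow> (\<forall>i\<in>{1..l}. blk W 0 i = blk W i i) \<and> mtrace (blk W 0 0) = 1"

definition qcqp_feasible :: "nat \<Rightarrow> real vec \<Rightarrow> bool" where
  "qcqp_feasible l \<omega> \<longleftrightarrow> \<omega> \<in> carrier_vec (4*(l+1)) \<and> relax_constr l (outer \<omega>)"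

definition qcqp_global_min :: "nat \<Rightarrow> (nat \<Rightarrow> real mat) \<Rightarrow> (nat \<Rightarrow> real) \<Rightarrow> real vec \<Rightarrow> bool" where
  "qcqp_global_min l Q csq \<omega> \<longleftrightarrow> qcqp_feasible l \<omega> \<and>
     (\<forall>\<omega>'. qcqp_feasible l \<omega>' \<longrightarrow> relax_obj l Q csq (outer \<omega>) \<le> relax_obj l Q csq (outer \<omega>'))"

definition sdr_feasible :: "nat \<Rightarrow> real mat \<Rightarrow> bool" where
  "sdr_feasible l W \<longleftrightarrow> W \<in> carrier_mat (4*(l+1)) (4*(l+1)) \<and> transpose_mat W = W \<and> psd W
     \<and> relax_constr l W"

definition sdr_global_min :: "nat \<Rightarrow> (nat \<Rightarrow> real mat) \<Rightarrow> (nat \<Rightarrow> real) \<Rightarrow> real mat \<Rightarrow> bool" where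
  "sdr_global_min l Q csq W \<longleftrightarrow> sdr_feasible l W \<and>
     (\<forall>W'. sdr_feasible l W' \<longrightarrow> relax_obj l Q csq W \<le> relax_obj l Q csq W')"

definition sdr_tight :: "nat \<Rightarrow> (nat \<Rightarrow> real mat) \<Rightarrow> (nat \<Rightarrow> real) \<Rightarrow> bool" where
  "sdr_tight l Q csq \<longleftrightarrow> (\<exists>\<omega>. qcqp_global_min l Q csq \<omega>) \<and>
     (\<forall>\<omega>. qcqp_global_min l Q csq \<omega> \<longrightarrow> sdr_global_min l Q csq (outer \<omega>))"

definition tls_obj :: "nat \<Rightarrow> (nat \<Rightarrow> real mat) \<Rightarrow> (nat \<Rightarrow> real) \<Rightarrow> real vec \<Rightarrow> real" where
  "tls_obj l Q csq w = (\<Sum>i=1..l. min (w \<bullet> (Q i *\<^sub>v w)) (csq i))"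

definition tls_global_min :: "nat \<Rightarrow> (nat \<Rightarrow> real mat) \<Rightarrow> (nat \<Rightarrow> real) \<Rightarrow> real vec \<Rightarrow> bool" where
  "tls_global_min l Q csq w \<longleftrightarrow> unit_quat w \<and>
     (\<forall>w'. unit_quat w' \<longrightarrow> tls_obj l Q csq w \<le> tls_obj l Q csq w')"

end

theory Submission
  imports Defs
begin

lemma real_sym_eigvec:
  fixes A :: "real mat"
  assumes A: "A \<in> carrier_mat n n" and n: "0 < n"
    and sym: "\<And>i j. i<n \<Longrightarrow> j<n \<Longrightarrow> A $$ (i,j) = A $$ (j,i)"
  shows "\<exists>v mu. v \<in> carrier_vec n \<and> v \<noteq> 0\<^sub>v n \<and> A *\<^sub>v v = mu \<cdot>\<^sub>v v"
proof -
  define Ac where "Ac = map_mat complex_of_real A"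
  have Ac: "Ac \<in> carrier_mat n n" using A by (simp add: Ac_def)
  obtain as where cp: "char_poly Ac = (\<Prod>a\<leftarrow>as. [:- a, 1:])" and len: "length as = n"
    using char_poly_factorized[OF Ac] by blast
  obtain a where a: "a \<in> set as" using len n by (cases as) auto
  have "poly (char_poly Ac) a = 0" unfolding cp
    using a by (simp add: poly_prod_list prod_list_zero_iff)
  hence "eigenvalue Ac a" using eigenvalue_root_char_poly[OF Ac] by simp
  then obtain v where ev: "eigenvector Ac v a" unfolding eigenvalue_def by blast
  hence v: "v \<in> carrier_vec n" "v \<noteq> 0\<^sub>v n" "Ac *\<^sub>v v = a \<cdot>\<^sub>v v"
    using Ac unfolding eigenvector_def by auto
  define p where "p = (\<lambda>i. Re (v $ i))"
  define q where "q = (\<lambda>i. Im (v $ i))"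
  define r where "r = Re a"
  define t where "t = Im a"
  have E: "(\<Sum>j<n. complex_of_real (A $$ (i,j)) * v $ j) = a * v $ i" if i: "i < n" for i
  proof -
    have "(Ac *\<^sub>v v) $ i = (a \<cdot>\<^sub>v v) $ i" using v(3) by simp
    thus ?thesis using i Ac A v(1)
      by (simp add: mult_mat_vec_def scalar_prod_def Ac_def lessThan_atLeast0 row_def)
  qed
  have Ep: "(\<Sum>j<n. A $$ (i,j) * p j) = r * p i - t * q i" if i: "i < n" for i
    using arg_cong[OF E[OF i], of Re] by (simp add: Re_sum p_def q_def r_def t_def)
  have Eq: "(\<Sum>j<n. A $$ (i,j) * q j) = t * p i + r * q i" if i: "i < n" for i
    using arg_cong[OF E[OF i], of Im] by (simp add: Im_sum p_def q_def r_def t_def)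
  have swap: "(\<Sum>i<n. q i * (\<Sum>j<n. A $$ (i,j) * p j)) = (\<Sum>i<n. p i * (\<Sum>j<n. A $$ (i,j) * q j))"
  proof -
    have "(\<Sum>i<n. q i * (\<Sum>j<n. A $$ (i,j) * p j)) = (\<Sum>i<n. \<Sum>j<n. q i * A $$ (i,j) * p j)"
      by (simp add: sum_distrib_left mult.assoc)
    also have "\<dots> = (\<Sum>j<n. \<Sum>i<n. q i * A $$ (i,j) * p j)" by (rule sum.swap)
    also have "\<dots> = (\<Sum>j<n. \<Sum>i<n. p j * (A $$ (j,i) * q i))"
      by (intro sum.cong refl) (simp add: sym mult_ac)
    also have "\<dots> = (\<Sum>i<n. p i * (\<Sum>j<n. A $$ (i,j) * q j))"
      by (simp add: sum_distrib_left)
    finally show ?thesis .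
  qed
  have "(\<Sum>i<n. q i * (r * p i - t * q i)) = (\<Sum>i<n. p i * (t * p i + r * q i))"
    using swap Ep Eq by simp
  hence "t * (\<Sum>i<n. p i ^ 2 + q i ^ 2) = 0"
    by (simp add: algebra_simps sum.distrib sum_subtractf sum_distrib_left power2_eq_square)
  moreover have pos: "(\<Sum>i<n. p i ^ 2 + q i ^ 2) > 0"
  proof -
    obtain i where i: "i < n" "v $ i \<noteq> 0" using v(1,2) by (metis carrier_vecD eq_vecI index_zero_vec(1,2))
    hence "p i ^ 2 + q i ^ 2 > 0" unfolding p_def q_def
      by (metis complex_eq_iff sum_power2_gt_zero_iff zero_complex.simps)
    thus ?thesis using i by (intro sum_pos2[of _ i]) auto
  qed
  ultimately have t0: "t = 0" by simp
  have gen: "\<exists>v mu. v \<in> carrier_vec n \<and> v \<noteq> 0\<^sub>v n \<and> A *\<^sub>v v = mu \<cdot>\<^sub>v v"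
    if nz: "\<exists>i<n. f i \<noteq> 0" and ef: "\<And>i. i < n \<Longrightarrow> (\<Sum>j<n. A $$ (i,j) * f j) = r * f i" for f
  proof (intro exI conjI)
    show "vec n f \<in> carrier_vec n" by simp
    show "vec n f \<noteq> 0\<^sub>v n"
    proof
      assume "vec n f = 0\<^sub>v n"
      then have "\<And>i. i < n \<Longrightarrow> f i = 0" by (metis index_vec index_zero_vec(1))
      with nz show False by blast
    qed
    show "A *\<^sub>v vec n f = r \<cdot>\<^sub>v vec n f"
      by (rule eq_vecI) (insert A ef, auto simp: mult_mat_vec_def scalar_prod_def lessThan_atLeast0 row_def)
  qed
  show ?thesis
  proof (cases "\<exists>i<n. p i \<noteq> 0")
    case True
    show ?thesis by (rule gen[OF True]) (insert Ep t0, auto)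
  next
    case False
    have qnz: "\<exists>i<n. q i \<noteq> 0"
    proof (rule ccontr)
      assume "\<not> ?thesis"
      hence "\<forall>i<n. q i = 0 \<and> p i = 0" using False by auto
      hence "(\<Sum>i<n. p i ^ 2 + q i ^ 2) = 0" by simp
      with pos show False by simp
    qed
    show ?thesis by (rule gen[OF qnz]) (insert Eq t0 False, auto)
  qed
qed

lemma mv_comp: "A \<in> carrier_mat n m \<Longrightarrow> a < n \<Longrightarrow> dim_vec x = m \<Longrightarrow>
   (A *\<^sub>v x) $ a = (\<Sum>b<m. A $$ (a,b) * x $ b)"
  by (simp add: mult_mat_vec_def scalar_prod_def lessThan_atLeast0 row_def)

lemma sp_comp: "dim_vec y = n \<Longrightarrow> x \<bullet> y = (\<Sum>a<n. x $ a * y $ a)"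
  by (simp add: scalar_prod_def lessThan_atLeast0)

definition ortho :: "nat \<Rightarrow> (nat \<Rightarrow> real vec) \<Rightarrow> nat \<Rightarrow> bool" where
  "ortho n u k \<longleftrightarrow> (\<forall>i<k. u i \<in> carrier_vec n) \<and> (\<forall>i<k. \<forall>j<k. u i \<bullet> u j = (if i = j then 1 else 0))"

lemma exists_orth_unit:
  assumes o: "ortho n u k" and k: "k < n"
  shows "\<exists>z \<in> carrier_vec n. z \<bullet> z = 1 \<and> (\<forall>j<k. u j \<bullet> z = 0)"
proof -
  have uc: "\<And>j. j < k \<Longrightarrow> u j \<in> carrier_vec n" using o unfolding ortho_def by auto
  have uu: "\<And>i j. i < k \<Longrightarrow> j < k \<Longrightarrow> u i \<bullet> u j = (if i = j then 1 else 0)" using o unfolding ortho_def by auto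
  define p where "p = (\<lambda>i. vec n (\<lambda>a. (if a = i then 1 else 0) - (\<Sum>j<k. u j $ i * u j $ a)) :: real vec)"
  have orthp: "u m \<bullet> p i = 0" if m: "m < k" and i: "i < n" for m i
  proof -
    have "u m \<bullet> p i = (\<Sum>a<n. u m $ a * ((if a = i then 1 else 0) - (\<Sum>j<k. u j $ i * u j $ a)))"
      by (simp add: sp_comp[of _ n] p_def)
    also have "\<dots> = (\<Sum>a<n. u m $ a * (if a = i then 1 else 0)) - (\<Sum>a<n. \<Sum>j<k. u m $ a * (u j $ i * u j $ a))"
      by (simp add: algebra_simps sum_subtractf sum_distrib_left)
    also have "(\<Sum>a<n. \<Sum>j<k. u m $ a * (u j $ i * u j $ a)) = (\<Sum>j<k. \<Sum>a<n. u m $ a * (u j $ i * u j $ a))"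
      by (rule sum.swap)
    also have "\<dots> = (\<Sum>j<k. u j $ i * (\<Sum>a<n. u m $ a * u j $ a))"
      by (simp add: sum_distrib_left mult_ac)
    also have "(\<Sum>a<n. u m $ a * (if a = i then 1 else 0)) = u m $ i"
      using i by (simp add: if_distrib sum.delta cong: if_cong)
    also have "(\<Sum>j<k. u j $ i * (\<Sum>a<n. u m $ a * u j $ a)) = (\<Sum>j<k. u j $ i * (u m \<bullet> u j))"
      using uc by (intro sum.cong refl) (simp add: sp_comp[of _ n])
    also have "\<dots> = (\<Sum>j<k. u j $ i * (if m = j then 1 else 0))" using uu m by (intro sum.cong refl) simp
    also have "\<dots> = u m $ i" using m by (simp add: if_distrib sum.delta sum.delta' cong: if_cong)
    finally show ?thesis by simp
  qed
  show ?thesis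
  proof (cases "\<exists>i<n. p i \<noteq> 0\<^sub>v n")
    case True
    then obtain i where i: "i < n" "p i \<noteq> 0\<^sub>v n" by blast
    have pc: "p i \<in> carrier_vec n" by (simp add: p_def)
    have pp: "p i \<bullet> p i > 0"
    proof -
      obtain a where a: "a < n" "p i $ a \<noteq> 0" using i pc
        by (metis carrier_vecD eq_vecI index_zero_vec(1,2))
      have "p i \<bullet> p i = (\<Sum>b<n. p i $ b * p i $ b)" by (simp add: sp_comp[of _ n] p_def)
      also have "\<dots> > 0" using a by (intro sum_pos2[of _ a]) (auto simp: zero_less_mult_iff)
      finally show ?thesis .
    qed
    define z where "z = (1 / sqrt (p i \<bullet> p i)) \<cdot>\<^sub>v p i"
    have "z \<bullet> z = (1 / sqrt (p i \<bullet> p i))^2 * (p i \<bullet> p i)"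
      unfolding z_def using pc by (simp add: power2_eq_square)
    also have "\<dots> = 1" using pp by (simp add: power_divide)
    finally have zz: "z \<bullet> z = 1" .
    have "\<forall>j<k. u j \<bullet> z = 0" unfolding z_def using orthp[OF _ i(1)] uc pc by simp
    moreover have "z \<in> carrier_vec n" unfolding z_def using pc by simp
    ultimately show ?thesis using zz by blast
  next
    case False
    have pz: "(if a = i then 1 else 0) = (\<Sum>j<k. u j $ i * u j $ a)" if ia: "i < n" "a < n" for i a
    proof -
      have "p i $ a = 0\<^sub>v n $ a" using False ia by auto
      thus ?thesis using ia by (simp add: p_def)
    qed
    have "real n = (\<Sum>i<n. (1::real))" by simp
    also have "\<dots> = (\<Sum>i<n. \<Sum>j<k. u j $ i * u j $ i)" using pz by (intro sum.cong refl) (metis lessThan_iff)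
    also have "\<dots> = (\<Sum>j<k. u j \<bullet> u j)" using uc by (subst sum.swap) (intro sum.cong refl, simp add: sp_comp[of _ n])
    also have "\<dots> = real k" using uu by simp
    finally show ?thesis using k by simp
  qed
qed

lemma ortho_extend:
  assumes o: "ortho n u k" and k: "k \<le> n"
  shows "\<exists>w. ortho n w n \<and> (\<forall>j<k. w j = u j)"
  using o k
proof (induction "n - k" arbitrary: k u)
  case 0
  hence "k = n" by simp
  with 0 show ?case by blast
next
  case (Suc m)
  hence kn: "k < n" by simp
  obtain z where z: "z \<in> carrier_vec n" "z \<bullet> z = 1" "\<forall>j<k. u j \<bullet> z = 0"
    using exists_orth_unit[OF Suc.prems(1) kn] by blast
  have o': "ortho n (u(k := z)) (Suc k)"
    using Suc.prems(1) z unfolding ortho_def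
    by (auto simp: less_Suc_eq comm_scalar_prod[of _ n])
  have mm: "m = n - Suc k" using Suc.hyps(2) by simp
  from Suc.hyps(1)[OF mm o'] kn
  obtain w where "ortho n w n" "\<forall>j<Suc k. w j = (u(k := z)) j" by auto
  thus ?case by (intro exI[of _ w]) auto
qed

lemma ortho_complete:
  assumes o: "ortho n u n" and a: "a < n" and b: "b < n"
  shows "(\<Sum>j<n. u j $ a * u j $ b) = (if a = b then 1 else 0)"
proof -
  have uc: "\<And>j. j < n \<Longrightarrow> u j \<in> carrier_vec n" using o unfolding ortho_def by auto
  have uu: "\<And>i j. i < n \<Longrightarrow> j < n \<Longrightarrow> u i \<bullet> u j = (if i = j then 1 else 0)" using o unfolding ortho_def by auto
  define U where "U = mat n n (\<lambda>(i,a). u i $ a)"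
  have U: "U \<in> carrier_mat n n" "transpose_mat U \<in> carrier_mat n n" by (auto simp: U_def)
  have "U * transpose_mat U = 1\<^sub>m n"
  proof (rule eq_matI)
    fix i j assume ij: "i < dim_row (1\<^sub>m n)" "j < dim_col (1\<^sub>m n)"
    have "(U * transpose_mat U) $$ (i,j) = (\<Sum>a<n. u i $ a * u j $ a)"
      using ij U by (simp add: U_def scalar_prod_def lessThan_atLeast0 row_def col_def)
    also have "\<dots> = u i \<bullet> u j" using uc ij by (simp add: sp_comp[of _ n])
    finally show "(U * transpose_mat U) $$ (i,j) = 1\<^sub>m n $$ (i,j)" using uu ij by simp
  qed (use U in auto)
  hence "transpose_mat U * U = 1\<^sub>m n" using mat_mult_left_right_inverse U by blast
  hence "(transpose_mat U * U) $$ (a,b) = 1\<^sub>m n $$ (a,b)" by simp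
  thus ?thesis using a b U by (simp add: U_def scalar_prod_def lessThan_atLeast0 row_def col_def)
qed

lemma ortho_expand:
  assumes o: "ortho n u n" and x: "x \<in> carrier_vec n" and a: "a < n"
  shows "x $ a = (\<Sum>j<n. (u j \<bullet> x) * u j $ a)"
proof -
  have uc: "\<And>j. j < n \<Longrightarrow> u j \<in> carrier_vec n" using o unfolding ortho_def by auto
  have "(\<Sum>j<n. (u j \<bullet> x) * u j $ a) = (\<Sum>j<n. \<Sum>b<n. u j $ b * x $ b * u j $ a)"
    using x by (simp add: sp_comp[of _ n] sum_distrib_right)
  also have "\<dots> = (\<Sum>b<n. x $ b * (\<Sum>j<n. u j $ b * u j $ a))"
    by (subst sum.swap) (simp add: sum_distrib_left mult_ac)
  also have "\<dots> = (\<Sum>b<n. x $ b * (if b = a then 1 else 0))"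
    using ortho_complete[OF o _ a] by simp
  also have "\<dots> = x $ a" using a by (simp add: if_distrib sum.delta cong: if_cong)
  finally show ?thesis by simp
qed

lemma ortho_parseval:
  assumes o: "ortho n u n" and x: "x \<in> carrier_vec n" and y: "y \<in> carrier_vec n"
  shows "x \<bullet> y = (\<Sum>j<n. (u j \<bullet> x) * (u j \<bullet> y))"
proof -
  have uc: "\<And>j. j < n \<Longrightarrow> u j \<in> carrier_vec n" using o unfolding ortho_def by auto
  have "x \<bullet> y = (\<Sum>a<n. x $ a * y $ a)" using y by (simp add: sp_comp[of _ n])
  also have "\<dots> = (\<Sum>a<n. x $ a * (\<Sum>j<n. (u j \<bullet> y) * u j $ a))"
    using ortho_expand[OF o y] by simp
  also have "\<dots> = (\<Sum>j<n. (u j \<bullet> y) * (\<Sum>a<n. u j $ a * x $ a))"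
    by (simp add: sum_distrib_left sum_distrib_right mult_ac) (rule sum.swap)
  also have "\<dots> = (\<Sum>j<n. (u j \<bullet> x) * (u j \<bullet> y))" using x uc by (simp add: sp_comp[of _ n] mult_ac)
  finally show ?thesis .
qed

lemma sum_split_at: "k \<le> (n::nat) \<Longrightarrow> (\<Sum>j<n. f j) = (\<Sum>j<k. f j) + (\<Sum>q<n-k. f (k+q))"
proof (induction n)
  case 0 thus ?case by simp
next
  case (Suc n)
  show ?case
  proof (cases "k = Suc n")
    case True thus ?thesis by simp
  next
    case False
    hence kn: "k \<le> n" using Suc.prems by simp
    have "Suc n - k = Suc (n - k)" using kn by simp
    thus ?thesis using Suc.IH[OF kn] kn by (simp add: add.assoc)
  qed
qed

lemma sym_quad:
  fixes A :: "real mat"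
  assumes A: "A \<in> carrier_mat n n" and sym: "\<And>i j. i<n \<Longrightarrow> j<n \<Longrightarrow> A $$ (i,j) = A $$ (j,i)"
    and x: "x \<in> carrier_vec n" and y: "y \<in> carrier_vec n"
  shows "x \<bullet> (A *\<^sub>v y) = y \<bullet> (A *\<^sub>v x)"
proof -
  have "x \<bullet> (A *\<^sub>v y) = (\<Sum>a<n. x $ a * (\<Sum>b<n. A $$ (a,b) * y $ b))"
    using A x y by (simp add: sp_comp[of _ n] mv_comp[OF A])
  also have "\<dots> = (\<Sum>a<n. \<Sum>b<n. x $ a * A $$ (a,b) * y $ b)" by (simp add: sum_distrib_left mult_ac)
  also have "\<dots> = (\<Sum>b<n. \<Sum>a<n. x $ a * A $$ (a,b) * y $ b)" by (rule sum.swap)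
  also have "\<dots> = (\<Sum>b<n. \<Sum>a<n. y $ b * (A $$ (b,a) * x $ a))"
  proof (intro sum.cong refl)
    fix b a assume "b \<in> {..<n}" "a \<in> {..<n}"
    thus "x $ a * A $$ (a,b) * y $ b = y $ b * (A $$ (b,a) * x $ a)" using sym[of a b] by (simp add: mult_ac)
  qed
  also have "\<dots> = (\<Sum>b<n. y $ b * (\<Sum>a<n. A $$ (b,a) * x $ a))"
    by (simp add: sum_distrib_left)
  also have "\<dots> = y \<bullet> (A *\<^sub>v x)"
    using A x y by (simp add: sp_comp[of _ n] mv_comp[OF A])
  finally show ?thesis .
qed

lemma eig_extend:
  fixes A :: "real mat"
  assumes A: "A \<in> carrier_mat n n" and sym: "\<And>i j. i<n \<Longrightarrow> j<n \<Longrightarrow> A $$ (i,j) = A $$ (j,i)"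
    and o: "ortho n u k" and k: "k < n" and eig: "\<And>j. j < k \<Longrightarrow> A *\<^sub>v u j = d j \<cdot>\<^sub>v u j"
  shows "\<exists>z mu. ortho n (u(k := z)) (Suc k) \<and> A *\<^sub>v z = mu \<cdot>\<^sub>v z"
proof -
  obtain w where ow: "ortho n w n" and wu: "\<And>j. j < k \<Longrightarrow> w j = u j"
    using ortho_extend[OF o] k by auto
  have wc: "\<And>j. j < n \<Longrightarrow> w j \<in> carrier_vec n" using ow unfolding ortho_def by auto
  have ww: "\<And>i j. i < n \<Longrightarrow> j < n \<Longrightarrow> w i \<bullet> w j = (if i = j then 1 else 0)" using ow unfolding ortho_def by auto
  define m where "m = n - k"
  have m: "0 < m" "k + m = n" using k by (auto simp: m_def)
  define A' where "A' = mat m m (\<lambda>(p,q). w (k+p) \<bullet> (A *\<^sub>v w (k+q)))"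
  have A': "A' \<in> carrier_mat m m" by (simp add: A'_def)
  have symA': "A' $$ (p,q) = A' $$ (q,p)" if "p < m" "q < m" for p q
    using that m sym_quad[OF A sym wc wc] by (simp add: A'_def)
  obtain y mu where y: "y \<in> carrier_vec m" "y \<noteq> 0\<^sub>v m" "A' *\<^sub>v y = mu \<cdot>\<^sub>v y"
    using real_sym_eigvec[OF A' m(1) symA'] by blast
  have Ay: "(\<Sum>p<m. A' $$ (q,p) * y $ p) = mu * y $ q" if q: "q < m" for q
  proof -
    have "(A' *\<^sub>v y) $ q = (mu \<cdot>\<^sub>v y) $ q" using y(3) by simp
    thus ?thesis using q y(1) by (simp add: mv_comp[OF A'])
  qed
  define z0 where "z0 = vec n (\<lambda>a. \<Sum>p<m. y $ p * w (k+p) $ a)"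
  have z0c: "z0 \<in> carrier_vec n" by (simp add: z0_def)
  have wz0: "w j \<bullet> z0 = (\<Sum>p<m. y $ p * (w j \<bullet> w (k+p)))" if j: "j < n" for j
  proof -
    have "w j \<bullet> z0 = (\<Sum>a<n. w j $ a * (\<Sum>p<m. y $ p * w (k+p) $ a))"
      by (simp add: z0_def sp_comp[of _ n])
    also have "\<dots> = (\<Sum>a<n. \<Sum>p<m. y $ p * (w j $ a * w (k+p) $ a))"
      by (simp add: sum_distrib_left mult_ac)
    also have "\<dots> = (\<Sum>p<m. \<Sum>a<n. y $ p * (w j $ a * w (k+p) $ a))" by (rule sum.swap)
    also have "\<dots> = (\<Sum>p<m. y $ p * (w j \<bullet> w (k+p)))"
      using wc m by (simp add: sum_distrib_left sp_comp[of _ n])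
    finally show ?thesis .
  qed
  have wz0_low: "w j \<bullet> z0 = 0" if j: "j < k" for j
    using wz0[of j] j k ww m by simp
  have wz0_high: "w (k+q) \<bullet> z0 = y $ q" if q: "q < m" for q
  proof -
    have "w (k+q) \<bullet> z0 = (\<Sum>p<m. y $ p * (if q = p then 1 else 0))"
      using wz0[of "k+q"] q m ww by simp
    also have "\<dots> = y $ q" using q by (simp add: if_distrib sum.delta sum.delta' cong: if_cong)
    finally show ?thesis .
  qed
  have Az0: "A *\<^sub>v z0 = mu \<cdot>\<^sub>v z0"
  proof (rule eq_vecI)
    fix a assume "a < dim_vec (mu \<cdot>\<^sub>v z0)"
    hence a: "a < n" by (simp add: z0_def)
    have Aw: "(A *\<^sub>v w (k+p)) $ a = (\<Sum>q<m. A' $$ (q,p) * w (k+q) $ a)" if p: "p < m" for p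
    proof -
      have Awc: "A *\<^sub>v w (k+p) \<in> carrier_vec n" using A wc p m by auto
      have "(A *\<^sub>v w (k+p)) $ a = (\<Sum>j<n. (w j \<bullet> (A *\<^sub>v w (k+p))) * w j $ a)"
        by (rule ortho_expand[OF ow Awc a])
      also have "\<dots> = (\<Sum>j<k. (w j \<bullet> (A *\<^sub>v w (k+p))) * w j $ a) + (\<Sum>q<n-k. (w (k+q) \<bullet> (A *\<^sub>v w (k+p))) * w (k+q) $ a)"
        by (rule sum_split_at) (use k in simp)
      also have "(\<Sum>j<k. (w j \<bullet> (A *\<^sub>v w (k+p))) * w j $ a) = 0"
      proof (rule sum.neutral, rule ballI)
        fix j assume "j \<in> {..<k}"
        hence j: "j < k" by simp
        have "w j \<bullet> (A *\<^sub>v w (k+p)) = w (k+p) \<bullet> (A *\<^sub>v w j)"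
          using sym_quad[OF A sym wc wc] j k p m by simp
        also have "\<dots> = w (k+p) \<bullet> (d j \<cdot>\<^sub>v w j)" using eig[OF j] wu[OF j] by simp
        also have "\<dots> = d j * (w (k+p) \<bullet> w j)"
        proof -
          have "w j \<in> carrier_vec n" "w (k+p) \<in> carrier_vec n" using wc j k p m by auto
          thus ?thesis by simp
        qed
        also have "\<dots> = 0" using ww j p m k by simp
        finally show "(w j \<bullet> (A *\<^sub>v w (k+p))) * w j $ a = 0" by simp
      qed
      also have "(\<Sum>q<n-k. (w (k+q) \<bullet> (A *\<^sub>v w (k+p))) * w (k+q) $ a) = (\<Sum>q<m. A' $$ (q,p) * w (k+q) $ a)"
        using p by (intro sum.cong) (auto simp: m_def A'_def)
      finally show ?thesis by simp
    qed
    have "(A *\<^sub>v z0) $ a = (\<Sum>b<n. A $$ (a,b) * (\<Sum>p<m. y $ p * w (k+p) $ b))"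
      by (subst mv_comp[OF A a]) (simp_all add: z0_def)
    also have "\<dots> = (\<Sum>b<n. \<Sum>p<m. y $ p * (A $$ (a,b) * w (k+p) $ b))"
      by (simp add: sum_distrib_left mult_ac)
    also have "\<dots> = (\<Sum>p<m. \<Sum>b<n. y $ p * (A $$ (a,b) * w (k+p) $ b))" by (rule sum.swap)
    also have "\<dots> = (\<Sum>p<m. y $ p * (A *\<^sub>v w (k+p)) $ a)"
      using wc m a by (simp add: sum_distrib_left mv_comp[OF A])
    also have "\<dots> = (\<Sum>p<m. y $ p * (\<Sum>q<m. A' $$ (q,p) * w (k+q) $ a))"
      using Aw by simp
    also have "\<dots> = (\<Sum>p<m. \<Sum>q<m. w (k+q) $ a * (A' $$ (q,p) * y $ p))"
      by (simp add: sum_distrib_left mult_ac)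
    also have "\<dots> = (\<Sum>q<m. \<Sum>p<m. w (k+q) $ a * (A' $$ (q,p) * y $ p))" by (rule sum.swap)
    also have "\<dots> = (\<Sum>q<m. w (k+q) $ a * (mu * y $ q))"
      using Ay by (simp add: sum_distrib_left[symmetric])
    also have "\<dots> = (mu \<cdot>\<^sub>v z0) $ a" using a by (simp add: z0_def sum_distrib_left mult_ac)
    finally show "(A *\<^sub>v z0) $ a = (mu \<cdot>\<^sub>v z0) $ a" .
  qed (use A in \<open>simp add: z0_def\<close>)
  obtain q where q: "q < m" "y $ q \<noteq> 0" using y(1,2)
    by (metis carrier_vecD eq_vecI index_zero_vec(1,2))
  have zz0: "z0 \<bullet> z0 > 0"
  proof -
    have "z0 \<bullet> z0 = (\<Sum>j<n. (w j \<bullet> z0) * (w j \<bullet> z0))" by (rule ortho_parseval[OF ow z0c z0c])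
    also have "\<dots> > 0"
      by (rule sum_pos2[of _ "k+q"]) (use q m wz0_high in \<open>auto simp: zero_less_mult_iff\<close>)
    finally show ?thesis .
  qed
  define z where "z = (1 / sqrt (z0 \<bullet> z0)) \<cdot>\<^sub>v z0"
  have zc: "z \<in> carrier_vec n" by (simp add: z_def z0c)
  have "z \<bullet> z = (1 / sqrt (z0 \<bullet> z0))^2 * (z0 \<bullet> z0)"
    unfolding z_def using z0c by (simp add: power2_eq_square)
  also have "\<dots> = 1" using zz0 by (simp add: power_divide)
  finally have zz: "z \<bullet> z = 1" .
  have uz: "u j \<bullet> z = 0" if j: "j < k" for j
    using wz0_low[OF j] wu[OF j] wc[of j] j k z0c by (simp add: z_def)
  have Az: "A *\<^sub>v z = mu \<cdot>\<^sub>v z"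
    unfolding z_def using mult_mat_vec[OF A z0c] Az0 by (simp add: smult_smult_assoc mult.commute)
  have "ortho n (u(k := z)) (Suc k)"
    using o zc zz uz unfolding ortho_def
    by (auto simp: less_Suc_eq comm_scalar_prod[of _ n])
  with Az show ?thesis by blast
qed

lemma spectral_unsorted:
  fixes A :: "real mat"
  assumes A: "A \<in> carrier_mat n n" and sym: "\<And>i j. i<n \<Longrightarrow> j<n \<Longrightarrow> A $$ (i,j) = A $$ (j,i)"
  shows "\<exists>u d. ortho n u n \<and> (\<forall>j<n. A *\<^sub>v u j = d j \<cdot>\<^sub>v u j)"
proof -
  have "\<exists>u d. ortho n u k \<and> (\<forall>j<k. A *\<^sub>v u j = d j \<cdot>\<^sub>v u j)" if "k \<le> n" for k
    using that
  proof (induction k)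
    case 0 thus ?case by (auto simp: ortho_def)
  next
    case (Suc k)
    then obtain u d where ud: "ortho n u k" "\<forall>j<k. A *\<^sub>v u j = d j \<cdot>\<^sub>v u j" by auto
    obtain z mu where z: "ortho n (u(k := z)) (Suc k)" "A *\<^sub>v z = mu \<cdot>\<^sub>v z"
      using eig_extend[OF A sym ud(1) _ ] ud(2) Suc.prems by fastforce
    have "\<forall>j<Suc k. A *\<^sub>v (u(k:=z)) j = (d(k:=mu)) j \<cdot>\<^sub>v (u(k:=z)) j"
      using z(2) ud(2) by (auto simp: less_Suc_eq)
    with z(1) show ?case by blast
  qed
  thus ?thesis by blast
qed

definition is_spec :: "nat \<Rightarrow> real mat \<Rightarrow> (nat \<Rightarrow> real vec) \<Rightarrow> (nat \<Rightarrow> real) \<Rightarrow> bool" where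
  "is_spec n A u d \<longleftrightarrow> ortho n u n \<and> (\<forall>j<n. A *\<^sub>v u j = d j \<cdot>\<^sub>v u j) \<and> (\<forall>i j. i \<le> j \<longrightarrow> j < n \<longrightarrow> d i \<le> d j)"

lemma spectral_sorted:
  fixes A :: "real mat"
  assumes A: "A \<in> carrier_mat n n" and sym: "\<And>i j. i<n \<Longrightarrow> j<n \<Longrightarrow> A $$ (i,j) = A $$ (j,i)"
  shows "\<exists>u d. is_spec n A u d"
proof -
  obtain u d where o: "ortho n u n" and e: "\<forall>j<n. A *\<^sub>v u j = d j \<cdot>\<^sub>v u j"
    using spectral_unsorted[OF A sym] by blast
  define ix where "ix = sort_key d [0..<n]"
  have len: "length ix = n" unfolding ix_def by (metis length_sort length_upt minus_nat.diff_0)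
  have dist: "distinct ix" unfolding ix_def by (simp add: distinct_sort)
  have set: "set ix = {0..<n}" unfolding ix_def by simp
  have srt: "sorted (map d ix)" unfolding ix_def by (rule sorted_sort_key)
  have isn: "\<And>i. i < n \<Longrightarrow> ix ! i < n" using set len by (metis atLeastLessThan_iff nth_mem)
  have inj: "\<And>i j. i < n \<Longrightarrow> j < n \<Longrightarrow> (ix ! i = ix ! j) = (i = j)"
    using dist len by (simp add: nth_eq_iff_index_eq)
  have uc: "\<And>j. j < n \<Longrightarrow> u j \<in> carrier_vec n" using o unfolding ortho_def by auto
  have uu: "\<And>i j. i < n \<Longrightarrow> j < n \<Longrightarrow> u i \<bullet> u j = (if i = j then 1 else 0)" using o unfolding ortho_def by auto
  define u' where "u' = (\<lambda>i. u (ix ! i))"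
  define d' where "d' = (\<lambda>i. d (ix ! i))"
  have "ortho n u' n" unfolding ortho_def u'_def using uc uu isn inj by auto
  moreover have "\<forall>j<n. A *\<^sub>v u' j = d' j \<cdot>\<^sub>v u' j" using e isn by (simp add: u'_def d'_def)
  moreover have "\<forall>i j. i \<le> j \<longrightarrow> j < n \<longrightarrow> d' i \<le> d' j"
    using srt len unfolding sorted_iff_nth_mono d'_def by auto
  ultimately show ?thesis unfolding is_spec_def by blast
qed

lemma spec_entries:
  fixes A :: "real mat"
  assumes A: "A \<in> carrier_mat n n" and s: "is_spec n A u d" and a: "a < n" and b: "b < n"
  shows "A $$ (a,b) = (\<Sum>j<n. d j * (u j $ a * u j $ b))"
proof -
  have o: "ortho n u n" and e: "\<And>j. j < n \<Longrightarrow> A *\<^sub>v u j = d j \<cdot>\<^sub>v u j" using s unfolding is_spec_def by auto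
  have uc: "\<And>j. j < n \<Longrightarrow> u j \<in> carrier_vec n" using o unfolding ortho_def by auto
  have "(\<Sum>j<n. d j * (u j $ a * u j $ b)) = (\<Sum>j<n. (A *\<^sub>v u j) $ a * u j $ b)"
  proof (intro sum.cong refl)
    fix j assume "j \<in> {..<n}"
    hence j: "j < n" by simp
    have "dim_vec (u j) = n" using uc[OF j] by simp
    thus "d j * (u j $ a * u j $ b) = (A *\<^sub>v u j) $ a * u j $ b" using e[OF j] a by simp
  qed
  also have "\<dots> = (\<Sum>j<n. (\<Sum>c<n. A $$ (a,c) * u j $ c) * u j $ b)"
    using uc a by (intro sum.cong refl) (simp add: mv_comp[OF A])
  also have "\<dots> = (\<Sum>j<n. \<Sum>c<n. A $$ (a,c) * (u j $ c * u j $ b))"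
    by (simp add: sum_distrib_left sum_distrib_right mult_ac)
  also have "\<dots> = (\<Sum>c<n. \<Sum>j<n. A $$ (a,c) * (u j $ c * u j $ b))" by (rule sum.swap)
  also have "\<dots> = (\<Sum>c<n. A $$ (a,c) * (if c = b then 1 else 0))"
    using ortho_complete[OF o _ b] by (simp add: sum_distrib_left[symmetric])
  also have "\<dots> = A $$ (a,b)" using b by (simp add: if_distrib sum.delta cong: if_cong)
  finally show ?thesis by simp
qed

lemma eigs_spec:
  fixes A :: "real mat"
  assumes A: "A \<in> carrier_mat n n" and s: "is_spec n A u d"
  shows "eigs A = map d [0..<n]"
proof -
  have o: "ortho n u n" and srt: "\<And>i j. i \<le> j \<Longrightarrow> j < n \<Longrightarrow> d i \<le> d j" using s unfolding is_spec_def by auto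
  have uc: "\<And>j. j < n \<Longrightarrow> u j \<in> carrier_vec n" using o unfolding ortho_def by auto
  have uu: "\<And>i j. i < n \<Longrightarrow> j < n \<Longrightarrow> u i \<bullet> u j = (if i = j then 1 else 0)" using o unfolding ortho_def by auto
  define U where "U = mat n n (\<lambda>(i,a). u i $ a)"
  define D where "D = mat n n (\<lambda>(i,j). if i = j then d i else 0)"
  have U: "U \<in> carrier_mat n n" "transpose_mat U \<in> carrier_mat n n" by (auto simp: U_def)
  have D: "D \<in> carrier_mat n n" by (simp add: D_def)
  have UUt: "U * transpose_mat U = 1\<^sub>m n"
  proof (rule eq_matI)
    fix i j assume ij: "i < dim_row (1\<^sub>m n)" "j < dim_col (1\<^sub>m n)"
    have "(U * transpose_mat U) $$ (i,j) = (\<Sum>a<n. u i $ a * u j $ a)"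
      using ij U by (simp add: U_def scalar_prod_def lessThan_atLeast0 row_def col_def)
    also have "\<dots> = u i \<bullet> u j" using uc ij by (simp add: sp_comp[of _ n])
    finally show "(U * transpose_mat U) $$ (i,j) = 1\<^sub>m n $$ (i,j)" using uu ij by simp
  qed (use U in auto)
  hence UtU: "transpose_mat U * U = 1\<^sub>m n" using mat_mult_left_right_inverse U by blast
  have AD: "A = transpose_mat U * D * U"
  proof (rule eq_matI)
    fix a b assume ab: "a < dim_row (transpose_mat U * D * U)" "b < dim_col (transpose_mat U * D * U)"
    hence a: "a < n" and b: "b < n" using U D by auto
    have "(transpose_mat U * D * U) $$ (a,b) = (\<Sum>k<n. (\<Sum>j<n. u j $ a * D $$ (j,k)) * u k $ b)"
      using a b U D by (simp add: U_def scalar_prod_def lessThan_atLeast0 row_def col_def)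
    also have "\<dots> = (\<Sum>k<n. (u k $ a * d k) * u k $ b)"
      by (intro sum.cong refl) (simp add: D_def if_distrib sum.delta' cong: if_cong)
    also have "\<dots> = A $$ (a,b)" using spec_entries[OF A s a b] by (simp add: mult_ac)
    finally show "A $$ (a,b) = (transpose_mat U * D * U) $$ (a,b)" by simp
  qed (use A U D in auto)
  have "similar_mat_wit A D (transpose_mat U) U"
    unfolding similar_mat_wit_def Let_def using A U D UUt UtU AD by auto
  hence "similar_mat A D" unfolding similar_mat_def by blast
  hence "char_poly A = char_poly D" by (rule char_poly_similar)
  also have "\<dots> = (\<Prod>a\<leftarrow>diag_mat D. [:- a, 1:])"
    by (rule char_poly_upper_triangular[OF D]) (auto simp: upper_triangular_def D_def)
  also have "diag_mat D = map d [0..<n]" by (simp add: diag_mat_def D_def)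
  finally have cp: "char_poly A = (\<Prod>a\<leftarrow>map d [0..<n]. [:- a, 1:])" .
  have pr: "proots (\<Prod>a\<leftarrow>xs. [:- a, 1:]) = mset xs" for xs :: "real list"
  proof (induction xs)
    case Nil thus ?case by simp
  next
    case (Cons a xs)
    have nz: "(\<Prod>x\<leftarrow>xs. [:- x, 1:]) \<noteq> 0" by (auto simp: prod_list_zero_iff)
    have "proots (\<Prod>x\<leftarrow>a#xs. [:- x, 1:]) = proots ([:-a,1:] * (\<Prod>x\<leftarrow>xs. [:- x, 1:]))"
      by (simp only: list.map prod_list.Cons)
    also have "\<dots> = proots [:-a,1:] + proots (\<Prod>x\<leftarrow>xs. [:- x, 1:])"
      by (rule proots_mult) (use nz in auto)
    also have "\<dots> = mset (a#xs)" using Cons.IH by (simp add: proots_linear_factor)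
    finally show ?case .
  qed
  have "sorted (map d [0..<n])" unfolding sorted_iff_nth_mono using srt by auto
  moreover have "eigs A = sort (map d [0..<n])" unfolding eigs_def cp pr by (rule sorted_list_of_multiset_mset)
  ultimately show ?thesis by (simp add: sorted_sort_id) qed

lemma spec_basic:
  assumes s: "is_spec n A u d"
  shows "ortho n u n" "\<And>j. j < n \<Longrightarrow> A *\<^sub>v u j = d j \<cdot>\<^sub>v u j" "\<And>i j. i \<le> j \<Longrightarrow> j < n \<Longrightarrow> d i \<le> d j"
    "\<And>j. j < n \<Longrightarrow> u j \<in> carrier_vec n"
  using s unfolding is_spec_def ortho_def by auto

lemma qf_spec:
  fixes A :: "real mat"
  assumes A: "A \<in> carrier_mat n n" and sym: "\<And>i j. i<n \<Longrightarrow> j<n \<Longrightarrow> A $$ (i,j) = A $$ (j,i)"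
    and s: "is_spec n A u d" and x: "x \<in> carrier_vec n"
  shows "x \<bullet> (A *\<^sub>v x) = (\<Sum>j<n. d j * (u j \<bullet> x)^2)"
proof -
  note sb = spec_basic[OF s]
  have Ax: "A *\<^sub>v x \<in> carrier_vec n" using A x by simp
  have "x \<bullet> (A *\<^sub>v x) = (\<Sum>j<n. (u j \<bullet> x) * (u j \<bullet> (A *\<^sub>v x)))"
    by (rule ortho_parseval[OF sb(1) x Ax])
  also have "\<dots> = (\<Sum>j<n. d j * (u j \<bullet> x)^2)"
  proof (intro sum.cong refl)
    fix j assume "j \<in> {..<n}"
    hence j: "j < n" by simp
    have "u j \<bullet> (A *\<^sub>v x) = x \<bullet> (A *\<^sub>v u j)" by (rule sym_quad[OF A sym sb(4)[OF j] x])
    also have "\<dots> = d j * (u j \<bullet> x)" using sb(2)[OF j] sb(4)[OF j] x by (simp add: comm_scalar_prod[of _ n])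
    finally show "(u j \<bullet> x) * (u j \<bullet> (A *\<^sub>v x)) = d j * (u j \<bullet> x)^2" by (simp add: power2_eq_square)
  qed
  finally show ?thesis .
qed

lemma norm_spec:
  assumes s: "is_spec n A u d" and x: "x \<in> carrier_vec n"
  shows "x \<bullet> x = (\<Sum>j<n. (u j \<bullet> x)^2)"
  using ortho_parseval[OF spec_basic(1)[OF s] x x] by (simp add: power2_eq_square)

lemma spec_lam:
  fixes A :: "real mat"
  assumes A: "A \<in> carrier_mat n n" and s: "is_spec n A u d" and n: "0 < n"
  shows "lam_min A = d 0" "lam_max A = d (n - 1)" "1 < n \<Longrightarrow> lam_min2 A = d 1"
  using eigs_spec[OF A s] n by (auto simp: lam_min_def lam_max_def lam_min2_def last_map)

definition symm :: "nat \<Rightarrow> real mat \<Rightarrow> bool" where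
  "symm n A \<longleftrightarrow> A \<in> carrier_mat n n \<and> (\<forall>i<n. \<forall>j<n. A $$ (i,j) = A $$ (j,i))"

lemma lam_min_le:
  assumes A: "symm n A" and n: "0 < n" and x: "x \<in> carrier_vec n"
  shows "lam_min A * (x \<bullet> x) \<le> x \<bullet> (A *\<^sub>v x)"
proof -
  have Ac: "A \<in> carrier_mat n n" and sym: "\<And>i j. i<n \<Longrightarrow> j<n \<Longrightarrow> A $$ (i,j) = A $$ (j,i)"
    using A unfolding symm_def by auto
  obtain u d where s: "is_spec n A u d" using spectral_sorted[OF Ac sym] by blast
  note sb = spec_basic[OF s]
  have "lam_min A * (x \<bullet> x) = (\<Sum>j<n. d 0 * (u j \<bullet> x)^2)"
    using spec_lam(1)[OF Ac s n] norm_spec[OF s x] by (simp add: sum_distrib_left)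
  also have "\<dots> \<le> (\<Sum>j<n. d j * (u j \<bullet> x)^2)"
    by (intro sum_mono mult_right_mono) (use sb(3) in auto)
  also have "\<dots> = x \<bullet> (A *\<^sub>v x)" using qf_spec[OF Ac sym s x] by simp
  finally show ?thesis .
qed

lemma lam_max_ge:
  assumes A: "symm n A" and n: "0 < n" and x: "x \<in> carrier_vec n"
  shows "x \<bullet> (A *\<^sub>v x) \<le> lam_max A * (x \<bullet> x)"
proof -
  have Ac: "A \<in> carrier_mat n n" and sym: "\<And>i j. i<n \<Longrightarrow> j<n \<Longrightarrow> A $$ (i,j) = A $$ (j,i)"
    using A unfolding symm_def by auto
  obtain u d where s: "is_spec n A u d" using spectral_sorted[OF Ac sym] by blast
  note sb = spec_basic[OF s]
  have "x \<bullet> (A *\<^sub>v x) = (\<Sum>j<n. d j * (u j \<bullet> x)^2)" using qf_spec[OF Ac sym s x] by simp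
  also have "\<dots> \<le> (\<Sum>j<n. d (n-1) * (u j \<bullet> x)^2)"
    by (intro sum_mono mult_right_mono) (use sb(3) in auto)
  also have "\<dots> = lam_max A * (x \<bullet> x)"
    using spec_lam(2)[OF Ac s n] norm_spec[OF s x] by (simp add: sum_distrib_left)
  finally show ?thesis .
qed

lemma lam_min_eq:
  assumes A: "symm n A" and n: "0 < n"
    and low: "\<And>x. x \<in> carrier_vec n \<Longrightarrow> x \<bullet> x = 1 \<Longrightarrow> mu \<le> x \<bullet> (A *\<^sub>v x)"
    and v: "v \<in> carrier_vec n" "v \<bullet> v = 1" "v \<bullet> (A *\<^sub>v v) = mu"
  shows "lam_min A = mu"
proof -
  have Ac: "A \<in> carrier_mat n n" and sym: "\<And>i j. i<n \<Longrightarrow> j<n \<Longrightarrow> A $$ (i,j) = A $$ (j,i)"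
    using A unfolding symm_def by auto
  obtain u d where s: "is_spec n A u d" using spectral_sorted[OF Ac sym] by blast
  note sb = spec_basic[OF s]
  have "lam_min A \<le> mu" using lam_min_le[OF A n v(1)] v by simp
  moreover have "mu \<le> lam_min A"
  proof -
    have "u 0 \<bullet> (A *\<^sub>v u 0) = d 0 * (u 0 \<bullet> u 0)" using sb(2)[OF n] sb(4)[OF n] by simp
    moreover have "u 0 \<bullet> u 0 = 1" using sb(1) n unfolding ortho_def by auto
    ultimately show ?thesis using low[OF sb(4)[OF n]] spec_lam(1)[OF Ac s n] by simp
  qed
  ultimately show ?thesis by simp
qed

lemma lam_min_vec:
  assumes A: "symm n A" and n: "0 < n"
    and v: "v \<in> carrier_vec n" "v \<bullet> v = 1" "v \<bullet> (A *\<^sub>v v) = lam_min A"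
  shows "A *\<^sub>v v = lam_min A \<cdot>\<^sub>v v"
    and "\<And>x. x \<in> carrier_vec n \<Longrightarrow> x \<bullet> v = 0 \<Longrightarrow> 1 < n \<Longrightarrow> lam_min2 A * (x \<bullet> x) \<le> x \<bullet> (A *\<^sub>v x)"
proof -
  have Ac: "A \<in> carrier_mat n n" and sym: "\<And>i j. i<n \<Longrightarrow> j<n \<Longrightarrow> A $$ (i,j) = A $$ (j,i)"
    using A unfolding symm_def by auto
  obtain u d where s: "is_spec n A u d" using spectral_sorted[OF Ac sym] by blast
  note sb = spec_basic[OF s]
  have lm: "lam_min A = d 0" using spec_lam(1)[OF Ac s n] .
  define c where "c = (\<lambda>j. u j \<bullet> v)"
  have "(\<Sum>j<n. (d j - d 0) * c j ^ 2) = (\<Sum>j<n. d j * c j ^2) - d 0 * (\<Sum>j<n. c j ^ 2)"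
    by (simp add: algebra_simps sum_subtractf sum_distrib_left)
  also have "\<dots> = 0" using qf_spec[OF Ac sym s v(1)] norm_spec[OF s v(1)] v lm by (simp add: c_def)
  finally have z: "(\<Sum>j<n. (d j - d 0) * c j ^ 2) = 0" .
  have nn: "\<forall>j\<in>{..<n}. 0 \<le> (d j - d 0) * c j ^ 2" using sb(3) by auto
  have cz: "c j = 0" if j: "j < n" "d 0 < d j" for j
  proof -
    have "\<forall>x\<in>{..<n}. (d x - d 0) * c x ^ 2 = 0"
      using sum_nonneg_eq_0_iff[of "{..<n}" "\<lambda>j. (d j - d 0) * c j ^ 2"] nn z by blast
    hence "(d j - d 0) * c j ^ 2 = 0" using j(1) by blast
    moreover have "d j - d 0 \<noteq> 0" using j(2) by simp
    ultimately show ?thesis by simp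
  qed
  have dc: "d j * c j = d 0 * c j" if j: "j < n" for j
    using cz[OF j] sb(3)[of 0 j] j by (cases "d 0 < d j") auto
  show "A *\<^sub>v v = lam_min A \<cdot>\<^sub>v v"
  proof (rule eq_vecI)
    fix a assume "a < dim_vec (lam_min A \<cdot>\<^sub>v v)"
    hence a: "a < n" using v by simp
    have Av: "A *\<^sub>v v \<in> carrier_vec n" using Ac v by simp
    have "(A *\<^sub>v v) $ a = (\<Sum>j<n. (u j \<bullet> (A *\<^sub>v v)) * u j $ a)" by (rule ortho_expand[OF sb(1) Av a])
    also have "\<dots> = (\<Sum>j<n. d 0 * c j * u j $ a)"
    proof (intro sum.cong refl)
      fix j assume "j \<in> {..<n}"
      hence j: "j < n" by simp
      have "u j \<bullet> (A *\<^sub>v v) = v \<bullet> (A *\<^sub>v u j)" by (rule sym_quad[OF Ac sym sb(4)[OF j] v(1)])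
      also have "\<dots> = d j * c j" using sb(2)[OF j] sb(4)[OF j] v(1) by (simp add: c_def comm_scalar_prod[of _ n])
      finally show "(u j \<bullet> (A *\<^sub>v v)) * u j $ a = d 0 * c j * u j $ a" using dc[OF j] by simp
    qed
    also have "\<dots> = d 0 * v $ a" using ortho_expand[OF sb(1) v(1) a] by (simp add: c_def sum_distrib_left mult_ac)
    finally show "(A *\<^sub>v v) $ a = (lam_min A \<cdot>\<^sub>v v) $ a" using lm a v by simp
  qed (use Ac v in simp)
  fix x assume x: "x \<in> carrier_vec n" and xv: "x \<bullet> v = 0" and n1: "1 < n"
  have l2: "lam_min2 A = d 1" using spec_lam(3)[OF Ac s n n1] .
  define b where "b = (\<lambda>j. u j \<bullet> x)"
  have "lam_min2 A * (x \<bullet> x) \<le> (\<Sum>j<n. d j * b j ^ 2)"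
  proof (cases "d 1 = d 0")
    case True
    have "lam_min2 A * (x \<bullet> x) = (\<Sum>j<n. d 0 * b j ^ 2)"
      using l2 True norm_spec[OF s x] by (simp add: b_def sum_distrib_left)
    also have "\<dots> \<le> (\<Sum>j<n. d j * b j ^ 2)"
      by (intro sum_mono mult_right_mono) (use sb(3) in auto)
    finally show ?thesis .
  next
    case False
    hence lt: "d 0 < d 1" using sb(3)[of 0 1] n1 by simp
    have cj: "c j = 0" if "0 < j" "j < n" for j using cz[of j] lt sb(3)[of 1 j] that by simp
    have "0 = x \<bullet> v" using xv by simp
    also have "\<dots> = (\<Sum>j<n. b j * c j)" using ortho_parseval[OF sb(1) x v(1)] by (simp add: b_def c_def)
    also have "\<dots> = (\<Sum>j<n. if j = 0 then b 0 * c 0 else 0)"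
      by (intro sum.cong refl) (use cj in auto)
    also have "\<dots> = b 0 * c 0" using n by simp
    finally have bc: "b 0 * c 0 = 0" by simp
    have "c 0 \<noteq> 0"
    proof
      assume c0: "c 0 = 0"
      have "1 = v \<bullet> v" using v by simp
      also have "\<dots> = (\<Sum>j<n. c j ^ 2)" using norm_spec[OF s v(1)] by (simp add: c_def)
      also have "\<dots> = 0"
      proof (intro sum.neutral ballI)
        fix j assume "j \<in> {..<n}"
        thus "c j ^ 2 = 0" using cj[of j] c0 by (cases "j = 0") auto
      qed
      finally show False by simp
    qed
    hence b0: "b 0 = 0" using bc by simp
    have "lam_min2 A * (x \<bullet> x) = (\<Sum>j<n. d 1 * b j ^ 2)"
      using l2 norm_spec[OF s x] by (simp add: b_def sum_distrib_left)
    also have "\<dots> \<le> (\<Sum>j<n. d j * b j ^ 2)"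
    proof (intro sum_mono)
      fix j assume "j \<in> {..<n}"
      thus "d 1 * b j ^ 2 \<le> d j * b j ^ 2" using b0 sb(3)[of 1 j] by (cases "j = 0") (auto intro: mult_right_mono)
    qed
    finally show ?thesis .
  qed
  also have "\<dots> = x \<bullet> (A *\<^sub>v x)" using qf_spec[OF Ac sym s x] by (simp add: b_def)
  finally show "lam_min2 A * (x \<bullet> x) \<le> x \<bullet> (A *\<^sub>v x)" .
qed

lemma trace_psd:
  assumes T: "symm n T" and n: "0 < n"
    and Tpsd: "\<And>x. x \<in> carrier_vec n \<Longrightarrow> 0 \<le> x \<bullet> (T *\<^sub>v x)"
    and Xpsd: "\<And>x. x \<in> carrier_vec n \<Longrightarrow> 0 \<le> (\<Sum>a<n. \<Sum>b<n. x $ a * X a b * x $ b)"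
  shows "0 \<le> (\<Sum>a<n. \<Sum>b<n. T $$ (a,b) * X a b)"
proof -
  have Tc: "T \<in> carrier_mat n n" and sym: "\<And>i j. i<n \<Longrightarrow> j<n \<Longrightarrow> T $$ (i,j) = T $$ (j,i)"
    using T unfolding symm_def by auto
  obtain u d where s: "is_spec n T u d" using spectral_sorted[OF Tc sym] by blast
  note sb = spec_basic[OF s]
  have dpos: "0 \<le> d j" if j: "j < n" for j
  proof -
    have "u j \<bullet> (T *\<^sub>v u j) = d j * (u j \<bullet> u j)" using sb(2)[OF j] sb(4)[OF j] by simp
    moreover have "u j \<bullet> u j = 1" using sb(1) j unfolding ortho_def by auto
    ultimately show ?thesis using Tpsd[OF sb(4)[OF j]] by simp
  qed
  have "(\<Sum>a<n. \<Sum>b<n. T $$ (a,b) * X a b) = (\<Sum>a<n. \<Sum>b<n. \<Sum>j<n. d j * (u j $ a * X a b * u j $ b))"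
    using spec_entries[OF Tc s] by (simp add: sum_distrib_left sum_distrib_right mult_ac)
  also have "\<dots> = (\<Sum>a<n. \<Sum>j<n. \<Sum>b<n. d j * (u j $ a * X a b * u j $ b))"
    by (rule sum.cong[OF refl], rule sum.swap)
  also have "\<dots> = (\<Sum>j<n. \<Sum>a<n. \<Sum>b<n. d j * (u j $ a * X a b * u j $ b))"
    by (rule sum.swap)
  also have "\<dots> = (\<Sum>j<n. d j * (\<Sum>a<n. \<Sum>b<n. u j $ a * X a b * u j $ b))"
    by (simp add: sum_distrib_left)
  also have "\<dots> \<ge> 0"
  proof (rule sum_nonneg)
    fix j assume "j \<in> {..<n}"
    hence j: "j < n" by simp
    show "0 \<le> d j * (\<Sum>a<n. \<Sum>b<n. u j $ a * X a b * u j $ b)"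
      by (rule mult_nonneg_nonneg[OF dpos[OF j] Xpsd[OF sb(4)[OF j]]])
  qed
  finally show ?thesis .
qed

lemma sum4: "(\<Sum>i<4::nat. f i) = f 0 + f 1 + f 2 + f 3"
  by (simp add: numeral_eq_Suc lessThan_Suc add.commute add.left_commute)
lemma sum3: "(\<Sum>i<3::nat. f i) = f 0 + f 1 + f 2"
  by (simp add: numeral_eq_Suc lessThan_Suc add.commute add.left_commute)

lemma rotR_carrier: "rotR w \<in> carrier_mat 3 3"
  unfolding carrier_mat_def rotR_def Let_def mat_of_rows_list_def by (simp add: numeral_3_eq_3)

lemma rotR_entries:
  "rotR w $$ (0,0) = w$0^2 + w$1^2 - w$2^2 - w$3^2"
  "rotR w $$ (0,1) = 2*(w$1*w$2 - w$0*w$3)"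
  "rotR w $$ (0,2) = 2*(w$1*w$3 + w$0*w$2)"
  "rotR w $$ (1,0) = 2*(w$1*w$2 + w$0*w$3)"
  "rotR w $$ (1,1) = w$0^2 + w$2^2 - w$1^2 - w$3^2"
  "rotR w $$ (1,2) = 2*(w$2*w$3 - w$0*w$1)"
  "rotR w $$ (2,0) = 2*(w$1*w$3 - w$0*w$2)"
  "rotR w $$ (2,1) = 2*(w$2*w$3 + w$0*w$1)"
  "rotR w $$ (2,2) = w$0^2 + w$3^2 - w$1^2 - w$2^2"
  by (simp_all add: rotR_def Let_def mat_of_rows_list_def)

lemma rotR_mv:
  assumes x: "x \<in> carrier_vec 3"
  shows "(rotR w *\<^sub>v x) $ 0 = rotR w $$ (0,0) * x$0 + rotR w $$ (0,1) * x$1 + rotR w $$ (0,2) * x$2"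
    "(rotR w *\<^sub>v x) $ 1 = rotR w $$ (1,0) * x$0 + rotR w $$ (1,1) * x$1 + rotR w $$ (1,2) * x$2"
    "(rotR w *\<^sub>v x) $ 2 = rotR w $$ (2,0) * x$0 + rotR w $$ (2,1) * x$1 + rotR w $$ (2,2) * x$2"
  using x by (simp_all add: mv_comp[OF rotR_carrier] sum3)

lemma rot_norm_poly:
  fixes a b c d x0 x1 x2 :: real
  shows "((a^2 + b^2 - c^2 - d^2) * x0 + 2*(b*c - a*d) * x1 + 2*(b*d + a*c) * x2) * ((a^2 + b^2 - c^2 - d^2) * x0 + 2*(b*c - a*d) * x1 + 2*(b*d + a*c) * x2)
       + (2*(b*c + a*d) * x0 + (a^2 + c^2 - b^2 - d^2) * x1 + 2*(c*d - a*b) * x2) * (2*(b*c + a*d) * x0 + (a^2 + c^2 - b^2 - d^2) * x1 + 2*(c*d - a*b) * x2)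
       + (2*(b*d - a*c) * x0 + 2*(c*d + a*b) * x1 + (a^2 + d^2 - b^2 - c^2) * x2) * (2*(b*d - a*c) * x0 + 2*(c*d + a*b) * x1 + (a^2 + d^2 - b^2 - c^2) * x2)
       = (a*a+b*b+c*c+d*d)^2 * (x0*x0 + x1*x1 + x2*x2)"
  by (simp add: power2_eq_square algebra_simps)

lemma rot_sq:
  assumes x: "x \<in> carrier_vec 3" and w: "w \<in> carrier_vec 4"
  shows "(rotR w *\<^sub>v x) \<bullet> (rotR w *\<^sub>v x) = (w \<bullet> w)^2 * (x \<bullet> x)"
proof -
  have d: "dim_vec (rotR w *\<^sub>v x) = 3" using rotR_carrier[of w] by auto
  have "(rotR w *\<^sub>v x) \<bullet> (rotR w *\<^sub>v x) = (rotR w *\<^sub>v x)$0 * (rotR w *\<^sub>v x)$0 + (rotR w *\<^sub>v x)$1 * (rotR w *\<^sub>v x)$1 + (rotR w *\<^sub>v x)$2 * (rotR w *\<^sub>v x)$2"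
    unfolding sp_comp[OF d] sum3 ..
  also have "\<dots> = (w \<bullet> w)^2 * (x \<bullet> x)"
    unfolding rotR_mv[OF x] rotR_entries sp_comp[OF carrier_vecD[OF w]] sp_comp[OF carrier_vecD[OF x]] sum3 sum4
    by (rule rot_norm_poly)
  finally show ?thesis .
qed

definition Mm :: "real vec \<Rightarrow> real vec \<Rightarrow> nat \<Rightarrow> nat \<Rightarrow> real" where
  "Mm y x a b = (let y0 = y$0; y1 = y$1; y2 = y$2; x0 = x$0; x1 = x$1; x2 = x$2 in
     if a = 0 then (if b = 0 then y0*x0 + y1*x1 + y2*x2 else if b = 1 then y2*x1 - y1*x2 else if b = 2 then y0*x2 - y2*x0 else y1*x0 - y0*x1) else if a = 1 then (if b = 0 then y2*x1 - y1*x2 else if b = 1 then y0*x0 - y1*x1 - y2*x2 else if b = 2 then y0*x1 + y1*x0 else y0*x2 + y2*x0) else if a = 2 then (if b = 0 then y0*x2 - y2*x0 else if b = 1 then y0*x1 + y1*x0 else if b = 2 then -y0*x0 + y1*x1 - y2*x2 else y1*x2 + y2*x1) else (if b = 0 then y1*x0 - y0*x1 else if b = 1 then y0*x2 + y2*x0 else if b = 2 then y1*x2 + y2*x1 else -y0*x0 - y1*x1 + y2*x2))"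

definition QE :: "real vec \<Rightarrow> real vec \<Rightarrow> real mat" where
  "QE y x = mat 4 4 (\<lambda>(a,b). (y \<bullet> y + x \<bullet> x) * (if a = b then 1 else 0) - 2 * Mm y x a b)"

lemma QE_carrier: "QE y x \<in> carrier_mat 4 4" by (simp add: QE_def)

lemma Mm_sym: "Mm y x a b = Mm y x b a"
  by (auto simp: Mm_def Let_def)

lemma QE_sym: "QE y x $$ (a,b) = QE y x $$ (b,a)" if "a < 4" "b < 4"
  using that Mm_sym[of y x a b] by (simp add: QE_def)

lemma qf4: "A \<in> carrier_mat 4 4 \<Longrightarrow> w \<in> carrier_vec 4 \<Longrightarrow>
  w \<bullet> (A *\<^sub>v w) = (\<Sum>a<4. \<Sum>b<4. w $ a * A $$ (a,b) * w $ b)"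
  by (simp add: sp_comp[of _ 4] mv_comp sum_distrib_left mult_ac)

lemma Mpoly:
  fixes a b c d x0 x1 x2 y0 y1 y2 :: real
  shows "a * (y0*x0 + y1*x1 + y2*x2) * a + a * (y2*x1 - y1*x2) * b + a * (y0*x2 - y2*x0) * c + a * (y1*x0 - y0*x1) * d + b * (y2*x1 - y1*x2) * a + b * (y0*x0 - y1*x1 - y2*x2) * b + b * (y0*x1 + y1*x0) * c + b * (y0*x2 + y2*x0) * d + c * (y0*x2 - y2*x0) * a + c * (y0*x1 + y1*x0) * b + c * (-y0*x0 + y1*x1 - y2*x2) * c + c * (y1*x2 + y2*x1) * d + d * (y1*x0 - y0*x1) * a + d * (y0*x2 + y2*x0) * b + d * (y1*x2 + y2*x1) * c + d * (-y0*x0 - y1*x1 + y2*x2) * d = y0 * ((a^2 + b^2 - c^2 - d^2) * x0 + 2*(b*c - a*d) * x1 + 2*(b*d + a*c) * x2) +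
       y1 * (2*(b*c + a*d) * x0 + (a^2 + c^2 - b^2 - d^2) * x1 + 2*(c*d - a*b) * x2) +
       y2 * (2*(b*d - a*c) * x0 + 2*(c*d + a*b) * x1 + (a^2 + d^2 - b^2 - c^2) * x2)"
  by (simp add: power2_eq_square algebra_simps)

lemma Mm_exp: "(\<Sum>a<4. \<Sum>b<4. w $ a * Mm y x a b * w $ b) = w$0 * (y$0*x$0 + y$1*x$1 + y$2*x$2) * w$0 + w$0 * (y$2*x$1 - y$1*x$2) * w$1 + w$0 * (y$0*x$2 - y$2*x$0) * w$2 + w$0 * (y$1*x$0 - y$0*x$1) * w$3 + w$1 * (y$2*x$1 - y$1*x$2) * w$0 + w$1 * (y$0*x$0 - y$1*x$1 - y$2*x$2) * w$1 + w$1 * (y$0*x$1 + y$1*x$0) * w$2 + w$1 * (y$0*x$2 + y$2*x$0) * w$3 + w$2 * (y$0*x$2 - y$2*x$0) * w$0 + w$2 * (y$0*x$1 + y$1*x$0) * w$1 + w$2 * (-y$0*x$0 + y$1*x$1 - y$2*x$2) * w$2 + w$2 * (y$1*x$2 + y$2*x$1) * w$3 + w$3 * (y$1*x$0 - y$0*x$1) * w$0 + w$3 * (y$0*x$2 + y$2*x$0) * w$1 + w$3 * (y$1*x$2 + y$2*x$1) * w$2 + w$3 * (-y$0*x$0 - y$1*x$1 + y$2*x$2) * w$3"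
  unfolding sum4 by (simp add: Mm_def Let_def)

lemma QE_quad:
  assumes x: "x \<in> carrier_vec 3" and y: "y \<in> carrier_vec 3" and w: "w \<in> carrier_vec 4"
  shows "w \<bullet> (QE y x *\<^sub>v w) = (y \<bullet> y + x \<bullet> x) * (w \<bullet> w) - 2 * (y \<bullet> (rotR w *\<^sub>v x))"
proof -
  have d: "dim_vec (rotR w *\<^sub>v x) = 3" using rotR_carrier[of w] by auto
  have "w \<bullet> (QE y x *\<^sub>v w) = (\<Sum>a<4. \<Sum>b<4. w $ a * ((y \<bullet> y + x \<bullet> x) * (if a = b then 1 else 0) - 2 * Mm y x a b) * w $ b)"
    unfolding qf4[OF QE_carrier w] by (intro sum.cong refl) (simp add: QE_def)
  also have "\<dots> = (y \<bullet> y + x \<bullet> x) * (\<Sum>a<4. w $ a * w $ a) - 2 * (\<Sum>a<4. \<Sum>b<4. w $ a * Mm y x a b * w $ b)"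
    unfolding sum4 by (simp add: algebra_simps)
  also have "(\<Sum>a<4. w $ a * w $ a) = w \<bullet> w" using w by (simp add: sp_comp[of _ 4])
  also have "(\<Sum>a<4. \<Sum>b<4. w $ a * Mm y x a b * w $ b) = y \<bullet> (rotR w *\<^sub>v x)"
    unfolding Mm_exp sp_comp[OF d] sum3 rotR_mv[OF x] rotR_entries
    by (rule Mpoly)
  finally show ?thesis .
qed

lemma sp_self_nonneg: "0 \<le> (v :: real vec) \<bullet> v"
proof -
  have "v \<bullet> v = (\<Sum>a<dim_vec v. v$a * v$a)" by (rule sp_comp) simp
  also have "\<dots> \<ge> 0" by (rule sum_nonneg) simp
  finally show ?thesis .
qed

lemma sum_mult_delta: "q < (n::nat) \<Longrightarrow> (\<Sum>b<n. f b * (if b = q then 1 else (0::real))) = f q"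
proof -
  assume q: "q < n"
  have "(\<Sum>b<n. f b * (if b = q then 1 else 0)) = (\<Sum>b<n. if b = q then f b else 0)" by (rule sum.cong) auto
  thus ?thesis using q by simp
qed

lemma vnorm_sq: "(vnorm v)^2 = v \<bullet> v"
  unfolding vnorm_def using sp_self_nonneg[of v] by simp

lemma vnorm_nonneg: "0 \<le> vnorm v" unfolding vnorm_def using sp_self_nonneg[of v] by simp

lemma cs_sum: "(\<Sum>i<(n::nat). f i * g i)^2 \<le> (\<Sum>i<n. (f i)^2) * (\<Sum>i<n. (g i :: real)^2)"
proof -
  define F where "F = (\<Sum>i<n. (f i)^2)"
  define G where "G = (\<Sum>i<n. (g i)^2)"
  define P where "P = (\<Sum>i<n. f i * g i)"
  show ?thesis
  proof (cases "G = 0")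
    case True
    hence "\<forall>i\<in>{..<n}. (g i)^2 = 0" using sum_nonneg_eq_0_iff[of "{..<n}" "\<lambda>i. (g i)^2"] by (auto simp: G_def)
    hence "P = 0" unfolding P_def by simp
    thus ?thesis unfolding P_def F_def G_def by (simp add: mult_nonneg_nonneg sum_nonneg)
  next
    case False
    hence Gp: "G > 0" unfolding G_def by (metis less_eq_real_def sum_nonneg zero_le_power2)
    have "0 \<le> (\<Sum>i<n. (f i * G - g i * P)^2)" by (simp add: sum_nonneg)
    also have "\<dots> = (\<Sum>i<n. G^2 * (f i)^2 - 2*G*P*(f i * g i) + P^2 * (g i)^2)"
      by (intro sum.cong refl) (simp add: power2_eq_square algebra_simps)
    also have "\<dots> = G^2 * (\<Sum>i<n. (f i)^2) - 2*G*P*(\<Sum>i<n. f i * g i) + P^2 * (\<Sum>i<n. (g i)^2)"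
      by (simp add: sum.distrib sum_subtractf sum_distrib_left)
    also have "\<dots> = G^2 * F - 2 * G * P * P + P^2 * G"
      unfolding F_def[symmetric] G_def[symmetric] P_def[symmetric] by simp
    also have "\<dots> = G * (G * F - P^2)" by (simp add: power2_eq_square algebra_simps)
    finally have "0 \<le> G * F - P^2" using Gp by (simp add: zero_le_mult_iff)
    thus ?thesis unfolding P_def F_def G_def by (simp add: mult.commute)
  qed
qed

lemma cs_vec:
  assumes "dim_vec a = n" "dim_vec b = n"
  shows "(a \<bullet> b)^2 \<le> (a \<bullet> a) * (b \<bullet> (b :: real vec))"
  using cs_sum[of "\<lambda>i. a $ i" "\<lambda>i. b $ i" n] assms
  by (simp add: sp_comp[of _ n] power2_eq_square)

lemma cs_abs:
  assumes "dim_vec a = n" "dim_vec b = n"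
  shows "\<bar>a \<bullet> b\<bar> \<le> vnorm a * vnorm (b :: real vec)"
proof -
  have "\<bar>a \<bullet> b\<bar> = sqrt ((a \<bullet> b)^2)" by simp
  also have "\<dots> \<le> sqrt ((a \<bullet> a) * (b \<bullet> b))" using cs_vec[OF assms] real_sqrt_le_mono by blast
  also have "\<dots> = vnorm a * vnorm b" unfolding vnorm_def by (simp add: real_sqrt_mult)
  finally show ?thesis .
qed

lemma qf_smult:
  assumes A: "A \<in> carrier_mat n n" and w: "w \<in> carrier_vec n"
  shows "(c \<cdot>\<^sub>v w) \<bullet> (A *\<^sub>v (c \<cdot>\<^sub>v w)) = c^2 * (w \<bullet> (A *\<^sub>v (w::real vec)))"
  using A w by (simp add: mult_mat_vec[OF A w] power2_eq_square)

definition nrm :: "real vec \<Rightarrow> real vec" where "nrm w = (1 / sqrt (w \<bullet> w)) \<cdot>\<^sub>v w"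

lemma unit_scale:
  assumes w: "w \<in> carrier_vec 4" and wn: "w \<noteq> 0\<^sub>v 4"
  shows "unit_quat (nrm w)" "\<And>A. A \<in> carrier_mat 4 4 \<Longrightarrow> w \<bullet> (A *\<^sub>v w) = (w \<bullet> w) * (nrm w \<bullet> (A *\<^sub>v nrm w))"
    "w \<bullet> w > 0"
proof -
  show ww: "w \<bullet> w > 0"
  proof -
    obtain a where a: "a < 4" "w $ a \<noteq> 0" using w wn by (metis carrier_vecD eq_vecI index_zero_vec(1,2))
    have "w \<bullet> w = (\<Sum>b<4. w $ b * w $ b)" using w by (simp add: sp_comp[of _ 4])
    also have "\<dots> > 0" using a by (intro sum_pos2[of _ a]) (auto simp: zero_less_mult_iff)
    finally show ?thesis .
  qed
  define s where "s = sqrt (w \<bullet> w)"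
  have s: "s > 0" "s^2 = w \<bullet> w" using ww by (auto simp: s_def)
  have ud: "nrm w = (1/s) \<cdot>\<^sub>v w" by (simp add: nrm_def s_def)
  have uc: "nrm w \<in> carrier_vec 4" using w by (simp add: ud)
  have "nrm w \<bullet> nrm w = (1/s)^2 * (w \<bullet> w)" using w by (simp add: ud power2_eq_square)
  also have "\<dots> = 1" using s ww by (simp add: power_divide)
  finally have uu: "nrm w \<bullet> nrm w = 1" .
  show "unit_quat (nrm w)" using uc uu unfolding unit_quat_def by blast
  fix A :: "real mat" assume A: "A \<in> carrier_mat 4 4"
  have "nrm w \<bullet> (A *\<^sub>v nrm w) = (1/s)^2 * (w \<bullet> (A *\<^sub>v w))" unfolding ud by (rule qf_smult[OF A w])
  thus "w \<bullet> (A *\<^sub>v w) = (w \<bullet> w) * (nrm w \<bullet> (A *\<^sub>v nrm w))" using s ww by (simp add: power_divide)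
qed

lemma qf_eq_imp_eq:
  fixes A B :: "real mat"
  assumes A: "A \<in> carrier_mat n n" and B: "B \<in> carrier_mat n n"
    and sA: "\<And>i j. i < n \<Longrightarrow> j < n \<Longrightarrow> A $$ (i,j) = A $$ (j,i)"
    and sB: "\<And>i j. i < n \<Longrightarrow> j < n \<Longrightarrow> B $$ (i,j) = B $$ (j,i)"
    and eq: "\<And>w. w \<in> carrier_vec n \<Longrightarrow> w \<bullet> (A *\<^sub>v w) = w \<bullet> (B *\<^sub>v w)"
  shows "A = B"
proof -
  define D where "D = (\<lambda>a b. A $$ (a,b) - B $$ (a,b))"
  have qfD: "(\<Sum>a<n. \<Sum>b<n. w $ a * D a b * w $ b) = 0" if w: "w \<in> carrier_vec n" for w
  proof -
    have "w \<bullet> (A *\<^sub>v w) = (\<Sum>a<n. \<Sum>b<n. w $ a * A $$ (a,b) * w $ b)"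
      using A w by (simp add: sp_comp[of _ n] mv_comp sum_distrib_left mult_ac)
    moreover have "w \<bullet> (B *\<^sub>v w) = (\<Sum>a<n. \<Sum>b<n. w $ a * B $$ (a,b) * w $ b)"
      using B w by (simp add: sp_comp[of _ n] mv_comp sum_distrib_left mult_ac)
    ultimately show ?thesis using eq[OF w] by (simp add: D_def algebra_simps sum_subtractf)
  qed
  have Dsym: "D a b = D b a" if "a < n" "b < n" for a b using sA sB that by (simp add: D_def)
  define Bl where "Bl = (\<lambda>v w. \<Sum>a<n. \<Sum>b<n. v a * D a b * w b)"
  have Bq: "Bl v v = 0" for v using qfD[of "vec n v"] by (simp add: Bl_def)
  have Bsum: "Bl (\<lambda>i. v i + w i) (\<lambda>i. v i + w i) = Bl v v + Bl v w + Bl w v + Bl w w" for v w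
    by (simp add: Bl_def algebra_simps sum.distrib)
  have Bdelta: "Bl (\<lambda>i. if i = p then 1 else 0) (\<lambda>i. if i = q then 1 else 0) = D p q" if "p < n" "q < n" for p q
  proof -
    have "Bl (\<lambda>i. if i = p then 1 else 0) (\<lambda>i. if i = q then 1 else 0) = (\<Sum>a<n. if a = p then (\<Sum>b<n. D a b * (if b = q then 1 else 0)) else 0)"
      unfolding Bl_def by (intro sum.cong refl) auto
    also have "\<dots> = D p q" using that sum_mult_delta[of q n "D p"] by (simp add: sum.delta)
    finally show ?thesis .
  qed
  have off: "D p q = 0" if p: "p < n" and q: "q < n" for p q
  proof -
    define ep where "ep = (\<lambda>i::nat. if i = p then 1 else (0::real))"
    define eq where "eq = (\<lambda>i::nat. if i = q then 1 else (0::real))"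
    have "Bl ep eq + Bl eq ep = 0" using Bsum[of ep eq] Bq[of ep] Bq[of eq] Bq[of "\<lambda>i. ep i + eq i"] by simp
    hence "D p q + D q p = 0" using Bdelta[OF p q] Bdelta[OF q p] by (simp add: ep_def eq_def)
    thus ?thesis using Dsym p q by simp
  qed
  show ?thesis
    by (rule eq_matI) (use A B off in \<open>auto simp: D_def\<close>)
qed

lemma QE_unit:
  assumes x: "x \<in> carrier_vec 3" and y: "y \<in> carrier_vec 3" and w: "unit_quat w"
  shows "w \<bullet> (QE y x *\<^sub>v w) = (vnorm (y - rotR w *\<^sub>v x))^2"
proof -
  have wc: "w \<in> carrier_vec 4" and ww: "w \<bullet> w = 1" using w unfolding unit_quat_def by auto
  have Rx: "rotR w *\<^sub>v x \<in> carrier_vec 3" using rotR_carrier[of w] x by simp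
  have "(vnorm (y - rotR w *\<^sub>v x))^2 = (y - rotR w *\<^sub>v x) \<bullet> (y - rotR w *\<^sub>v x)" by (rule vnorm_sq)
  also have "\<dots> = y \<bullet> y - 2 * (y \<bullet> (rotR w *\<^sub>v x)) + (rotR w *\<^sub>v x) \<bullet> (rotR w *\<^sub>v x)"
    using x y Rx by (simp add: minus_scalar_prod_distrib scalar_prod_minus_distrib comm_scalar_prod[of "rotR w *\<^sub>v x" 3 y])
  also have "(rotR w *\<^sub>v x) \<bullet> (rotR w *\<^sub>v x) = x \<bullet> x" using rot_sq[OF x wc] ww by simp
  finally show ?thesis using QE_quad[OF x y wc] ww by simp
qed

lemma Qmat_QE:
  assumes x: "x \<in> carrier_vec 3" and y: "y \<in> carrier_vec 3"
  shows "Qmat y x = QE y x"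
  unfolding Qmat_def
proof (rule the_equality)
  show "QE y x \<in> carrier_mat 4 4 \<and> transpose_mat (QE y x) = QE y x \<and>
    (\<forall>w. unit_quat w \<longrightarrow> w \<bullet> (QE y x *\<^sub>v w) = (vnorm (y - rotR w *\<^sub>v x))\<^sup>2)"
  proof (intro conjI allI impI)
    show "transpose_mat (QE y x) = QE y x"
    proof (rule eq_matI)
      fix i j assume "i < dim_row (QE y x)" "j < dim_col (QE y x)"
      thus "transpose_mat (QE y x) $$ (i,j) = QE y x $$ (i,j)" using QE_carrier[of y x] QE_sym[of j i] by auto
    qed (use QE_carrier[of y x] in auto)
  qed (use QE_carrier QE_unit[OF x y] in auto)
next
  fix Q assume Q: "Q \<in> carrier_mat 4 4 \<and> transpose_mat Q = Q \<and>
    (\<forall>w. unit_quat w \<longrightarrow> w \<bullet> (Q *\<^sub>v w) = (vnorm (y - rotR w *\<^sub>v x))\<^sup>2)"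
  have Qc: "Q \<in> carrier_mat 4 4" using Q by simp
  have sQ: "Q $$ (i,j) = Q $$ (j,i)" if "i < 4" "j < 4" for i j
  proof -
    have "transpose_mat Q $$ (i,j) = Q $$ (i,j)" using Q by simp
    thus ?thesis using that Qc by simp
  qed
  have unit_eq: "u \<bullet> (Q *\<^sub>v u) = u \<bullet> (QE y x *\<^sub>v u)" if u: "unit_quat u" for u
    using Q u QE_unit[OF x y u] by simp
  show "Q = QE y x"
  proof (rule qf_eq_imp_eq[OF Qc QE_carrier sQ QE_sym])
    fix w :: "real vec" assume w: "w \<in> carrier_vec 4"
    show "w \<bullet> (Q *\<^sub>v w) = w \<bullet> (QE y x *\<^sub>v w)"
    proof (cases "w = 0\<^sub>v 4")
      case True thus ?thesis using Qc QE_carrier[of y x] by simp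
    next
      case False
      show ?thesis using unit_scale(2)[OF w False Qc] unit_scale(2)[OF w False QE_carrier] unit_eq[OF unit_scale(1)[OF w False]]
        by simp
    qed
  qed
qed

lemma Pmat_Qmat: "Pmat R0 x = Qmat (R0 *\<^sub>v x) x"
  unfolding Pmat_def Qmat_def ..

lemma QE_psd:
  assumes x: "x \<in> carrier_vec 3" and y: "y \<in> carrier_vec 3" and w: "w \<in> carrier_vec 4"
  shows "0 \<le> w \<bullet> (QE y x *\<^sub>v w)"
proof (cases "w = 0\<^sub>v 4")
  case True thus ?thesis using QE_carrier[of y x] by simp
next
  case False
  show ?thesis using unit_scale(2)[OF w False QE_carrier] unit_scale(3)[OF w False]
    QE_unit[OF x y unit_scale(1)[OF w False]] by simp
qed

lemma sum_blocks: "(\<Sum>r<4*m. f r) = (\<Sum>i<m. \<Sum>a<4::nat. f (4*i+a))"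
proof (induction m)
  case 0 thus ?case by simp
next
  case (Suc m)
  have "(\<Sum>r<4*Suc m. f r) = (\<Sum>r<4*m. f r) + (\<Sum>q<4*Suc m - 4*m. f (4*m+q))"
    by (rule sum_split_at) simp
  also have "4*Suc m - 4*m = 4" by simp
  finally show ?case using Suc.IH by simp
qed

lemma block_sum:
  assumes i: "i < m" and z: "\<And>r. r < 4*m \<Longrightarrow> r div 4 \<noteq> i \<Longrightarrow> f r = 0"
  shows "(\<Sum>r<4*m. f r) = (\<Sum>a<4::nat. f (4*i+a))"
proof -
  have "(\<Sum>r<4*m. f r) = (\<Sum>i'<m. \<Sum>a<4::nat. f (4*i'+a))" by (rule sum_blocks)
  also have "\<dots> = (\<Sum>i'<m. if i' = i then (\<Sum>a<4::nat. f (4*i+a)) else 0)"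
  proof (intro sum.cong refl)
    fix i' assume "i' \<in> {..<m}"
    hence i': "i' < m" by simp
    show "(\<Sum>a<4::nat. f (4*i'+a)) = (if i' = i then (\<Sum>a<4::nat. f (4*i+a)) else 0)"
    proof (cases "i' = i")
      case False
      have "f (4*i'+a) = 0" if "a < 4" for a using z[of "4*i'+a"] that i' False by simp
      thus ?thesis using False by simp
    qed simp
  qed
  also have "\<dots> = (\<Sum>a<4::nat. f (4*i+a))" using i by simp
  finally show ?thesis .
qed

lemma block_sum2:
  assumes i: "i < m" and i0: "0 < i" and z: "\<And>r. r < 4*m \<Longrightarrow> r div 4 \<noteq> 0 \<Longrightarrow> r div 4 \<noteq> i \<Longrightarrow> f r = 0"
  shows "(\<Sum>r<4*m. f r) = (\<Sum>a<4::nat. f a) + (\<Sum>a<4::nat. f (4*i+a))"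
proof -
  have "(\<Sum>r<4*m. f r) = (\<Sum>i'<m. \<Sum>a<4::nat. f (4*i'+a))" by (rule sum_blocks)
  also have "\<dots> = (\<Sum>i'<m. (if i' = 0 then (\<Sum>a<4::nat. f a) else 0) + (if i' = i then (\<Sum>a<4::nat. f (4*i+a)) else 0))"
  proof (intro sum.cong refl)
    fix i' assume "i' \<in> {..<m}"
    hence i': "i' < m" by simp
    show "(\<Sum>a<4::nat. f (4*i'+a)) = (if i' = 0 then (\<Sum>a<4::nat. f a) else 0) + (if i' = i then (\<Sum>a<4::nat. f (4*i+a)) else 0)"
    proof (cases "i' = i \<or> i' = 0")
      case False
      have "f (4*i'+a) = 0" if "a < 4" for a using z[of "4*i'+a"] that i' False by simp
      thus ?thesis using False by simp
    next
      case True
      thus ?thesis using i0 by auto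
    qed
  qed
  also have "\<dots> = (\<Sum>a<4::nat. f a) + (\<Sum>a<4::nat. f (4*i+a))" using i i0 by (simp add: sum.distrib)
  finally show ?thesis .
qed

lemma qf_big: "W \<in> carrier_mat N N \<Longrightarrow> \<omega> \<in> carrier_vec N \<Longrightarrow>
  \<omega> \<bullet> (W *\<^sub>v \<omega>) = (\<Sum>r<N. \<omega> $ r * (\<Sum>s<N. W $$ (r,s) * \<omega> $ s))"
  by (simp add: sp_comp[of _ N] mv_comp)

lemma psd_block:
  fixes W :: "real mat"
  assumes W: "W \<in> carrier_mat (4*m) (4*m)" and p: "psd W" and i: "i < m" and x: "x \<in> carrier_vec 4"
  shows "0 \<le> (\<Sum>a<4. \<Sum>b<4. x $ a * W $$ (4*i+a, 4*i+b) * x $ b)"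
proof -
  define \<omega> where "\<omega> = vec (4*m) (\<lambda>r. if r div 4 = i then x $ (r mod 4) else 0)"
  have oc: "\<omega> \<in> carrier_vec (4*m)" by (simp add: \<omega>_def)
  have "0 \<le> \<omega> \<bullet> (W *\<^sub>v \<omega>)" using p oc W unfolding psd_def by auto
  also have "\<omega> \<bullet> (W *\<^sub>v \<omega>) = (\<Sum>r<4*m. \<omega> $ r * (\<Sum>s<4*m. W $$ (r,s) * \<omega> $ s))" by (rule qf_big[OF W oc])
  also have "\<dots> = (\<Sum>r<4*m. \<omega> $ r * (\<Sum>b<4. W $$ (r,4*i+b) * x $ b))"
  proof (rule sum.cong[OF refl])
    fix r assume "r \<in> {..<4*m}"
    have "(\<Sum>s<4*m. W $$ (r,s) * \<omega> $ s) = (\<Sum>b<4::nat. W $$ (r,4*i+b) * \<omega> $ (4*i+b))"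
      by (rule block_sum[OF i]) (simp add: \<omega>_def)
    also have "\<dots> = (\<Sum>b<4. W $$ (r,4*i+b) * x $ b)" using i by (intro sum.cong refl) (simp add: \<omega>_def)
    finally show "\<omega> $ r * (\<Sum>s<4*m. W $$ (r,s) * \<omega> $ s) = \<omega> $ r * (\<Sum>b<4. W $$ (r,4*i+b) * x $ b)" by simp
  qed
  also have "\<dots> = (\<Sum>a<4::nat. \<omega> $ (4*i+a) * (\<Sum>b<4. W $$ (4*i+a,4*i+b) * x $ b))"
    by (rule block_sum[OF i]) (simp add: \<omega>_def)
  also have "\<dots> = (\<Sum>a<4. \<Sum>b<4. x $ a * W $$ (4*i+a, 4*i+b) * x $ b)"
  proof (rule sum.cong[OF refl])
    fix a assume "a \<in> {..<4::nat}"
    hence "\<omega> $ (4*i+a) = x $ a" using i by (simp add: \<omega>_def)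
    thus "\<omega> $ (4*i+a) * (\<Sum>b<4. W $$ (4*i+a,4*i+b) * x $ b) = (\<Sum>b<4. x $ a * W $$ (4*i+a, 4*i+b) * x $ b)"
      by (simp add: sum_distrib_left mult.assoc)
  qed
  finally show ?thesis .
qed

lemma constr_entry:
  assumes c: "relax_constr l W" and i: "i \<in> {1..l}" and a: "a < 4" and b: "b < 4"
  shows "W $$ (a, 4*i+b) = W $$ (4*i+a, 4*i+b)"
proof -
  have "blk W 0 i = blk W i i" using c i unfolding relax_constr_def by auto
  hence "blk W 0 i $$ (a,b) = blk W i i $$ (a,b)" by simp
  thus ?thesis using a b by (simp add: blk_def)
qed

lemma psd_diff:
  fixes W :: "real mat"
  assumes W: "W \<in> carrier_mat (4*(l+1)) (4*(l+1))" and p: "psd W" and sy: "transpose_mat W = W"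
    and c: "relax_constr l W" and i: "i \<in> {1..l}" and x: "x \<in> carrier_vec 4"
  shows "0 \<le> (\<Sum>a<4. \<Sum>b<4. x $ a * (W $$ (a,b) - W $$ (4*i+a, 4*i+b)) * x $ b)"
proof -
  define m where "m = l+1"
  have Wm: "W \<in> carrier_mat (4*m) (4*m)" using W by (simp add: m_def)
  have im: "i < m" "0 < i" using i by (auto simp: m_def)
  have Ws: "W $$ (r,s) = W $$ (s,r)" if "r < 4*m" "s < 4*m" for r s
  proof -
    have "transpose_mat W $$ (s,r) = W $$ (s,r)" using sy by simp
    thus ?thesis using that Wm by simp
  qed
  define g where "g = (\<lambda>r. (if r div 4 = 0 then x $ (r mod 4) else 0) - (if r div 4 = i then x $ (r mod 4) else (0::real)))"
  define \<omega> where "\<omega> = vec (4*m) g"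
  have oc: "\<omega> \<in> carrier_vec (4*m)" by (simp add: \<omega>_def)
  have g0: "g a = x $ a" if "a < 4" for a using that im by (simp add: g_def)
  have gi: "g (4*i+a) = - x $ a" if "a < 4" for a using that im by (simp add: g_def)
  have swapE: "(\<Sum>a<4::nat. x $ a * (\<Sum>b<4. W $$ (4*i+b,4*i+a) * x $ b)) = (\<Sum>a<4::nat. x $ a * (\<Sum>b<4. W $$ (4*i+a,4*i+b) * x $ b))"
  proof -
    have "(\<Sum>a<4::nat. x $ a * (\<Sum>b<4. W $$ (4*i+b,4*i+a) * x $ b)) = (\<Sum>a<4::nat. \<Sum>b<4::nat. x $ b * W $$ (4*i+b,4*i+a) * x $ a)"
      by (simp add: sum_distrib_left mult_ac)
    also have "\<dots> = (\<Sum>b<4::nat. \<Sum>a<4::nat. x $ b * W $$ (4*i+b,4*i+a) * x $ a)" by (rule sum.swap)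
    also have "\<dots> = (\<Sum>a<4::nat. x $ a * (\<Sum>b<4. W $$ (4*i+a,4*i+b) * x $ b))"
      by (simp add: sum_distrib_left mult_ac)
    finally show ?thesis .
  qed
  have "0 \<le> \<omega> \<bullet> (W *\<^sub>v \<omega>)" using p oc Wm unfolding psd_def by auto
  also have "\<omega> \<bullet> (W *\<^sub>v \<omega>) = (\<Sum>r<4*m. g r * (\<Sum>s<4*m. W $$ (r,s) * g s))"
    using qf_big[OF Wm oc] by (simp add: \<omega>_def)
  also have "\<dots> = (\<Sum>r<4*m. g r * ((\<Sum>b<4. W $$ (r,b) * x $ b) - (\<Sum>b<4. W $$ (r,4*i+b) * x $ b)))"
  proof (rule sum.cong[OF refl])
    fix r assume "r \<in> {..<4*m}"
    have "(\<Sum>s<4*m. W $$ (r,s) * g s) = (\<Sum>b<4::nat. W $$ (r,b) * g b) + (\<Sum>b<4::nat. W $$ (r,4*i+b) * g (4*i+b))"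
      by (rule block_sum2[OF im]) (simp add: g_def)
    also have "\<dots> = (\<Sum>b<4. W $$ (r,b) * x $ b) - (\<Sum>b<4. W $$ (r,4*i+b) * x $ b)"
      using g0 gi by (simp add: sum_negf)
    finally show "g r * (\<Sum>s<4*m. W $$ (r,s) * g s) = g r * ((\<Sum>b<4. W $$ (r,b) * x $ b) - (\<Sum>b<4. W $$ (r,4*i+b) * x $ b))" by simp
  qed
  also have "\<dots> = (\<Sum>a<4::nat. g a * ((\<Sum>b<4. W $$ (a,b) * x $ b) - (\<Sum>b<4. W $$ (a,4*i+b) * x $ b)))
     + (\<Sum>a<4::nat. g (4*i+a) * ((\<Sum>b<4. W $$ (4*i+a,b) * x $ b) - (\<Sum>b<4. W $$ (4*i+a,4*i+b) * x $ b)))"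
    by (rule block_sum2[OF im]) (simp add: g_def)
  also have "\<dots> = (\<Sum>a<4::nat. x $ a * ((\<Sum>b<4. W $$ (a,b) * x $ b) - (\<Sum>b<4. W $$ (4*i+a,4*i+b) * x $ b)))
     - (\<Sum>a<4::nat. x $ a * ((\<Sum>b<4. W $$ (4*i+b,4*i+a) * x $ b) - (\<Sum>b<4. W $$ (4*i+a,4*i+b) * x $ b)))"
  proof -
    have e1: "W $$ (a,4*i+b) = W $$ (4*i+a,4*i+b)" if "a < 4" "b < 4" for a b
      by (rule constr_entry[OF c i that])
    have e2: "W $$ (4*i+a,b) = W $$ (4*i+b,4*i+a)" if "a < 4" "b < 4" for a b
    proof -
      have "W $$ (4*i+a,b) = W $$ (b,4*i+a)" using Ws[of "4*i+a" b] that im by simp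
      also have "\<dots> = W $$ (4*i+b,4*i+a)" by (rule constr_entry[OF c i that(2,1)])
      finally show ?thesis .
    qed
    have s1: "(\<Sum>a<4::nat. g a * ((\<Sum>b<4. W $$ (a,b) * x $ b) - (\<Sum>b<4. W $$ (a,4*i+b) * x $ b)))
      = (\<Sum>a<4::nat. x $ a * ((\<Sum>b<4. W $$ (a,b) * x $ b) - (\<Sum>b<4. W $$ (4*i+a,4*i+b) * x $ b)))"
    proof (intro sum.cong refl)
      fix a assume "a \<in> {..<4::nat}"
      hence a: "a < 4" by simp
      have "(\<Sum>b<4. W $$ (a,4*i+b) * x $ b) = (\<Sum>b<4. W $$ (4*i+a,4*i+b) * x $ b)"
        by (intro sum.cong refl) (use e1 a in simp)
      thus "g a * ((\<Sum>b<4. W $$ (a,b) * x $ b) - (\<Sum>b<4. W $$ (a,4*i+b) * x $ b))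
          = x $ a * ((\<Sum>b<4. W $$ (a,b) * x $ b) - (\<Sum>b<4. W $$ (4*i+a,4*i+b) * x $ b))"
        using g0[OF a] by simp
    qed
    have s2: "(\<Sum>a<4::nat. g (4*i+a) * ((\<Sum>b<4. W $$ (4*i+a,b) * x $ b) - (\<Sum>b<4. W $$ (4*i+a,4*i+b) * x $ b)))
      = - (\<Sum>a<4::nat. x $ a * ((\<Sum>b<4. W $$ (4*i+b,4*i+a) * x $ b) - (\<Sum>b<4. W $$ (4*i+a,4*i+b) * x $ b)))"
      unfolding sum_negf[symmetric]
    proof (intro sum.cong refl)
      fix a assume "a \<in> {..<4::nat}"
      hence a: "a < 4" by simp
      have "(\<Sum>b<4. W $$ (4*i+a,b) * x $ b) = (\<Sum>b<4. W $$ (4*i+b,4*i+a) * x $ b)"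
        by (intro sum.cong refl) (use e2 a in simp)
      thus "g (4*i+a) * ((\<Sum>b<4. W $$ (4*i+a,b) * x $ b) - (\<Sum>b<4. W $$ (4*i+a,4*i+b) * x $ b))
          = - (x $ a * ((\<Sum>b<4. W $$ (4*i+b,4*i+a) * x $ b) - (\<Sum>b<4. W $$ (4*i+a,4*i+b) * x $ b)))"
        using gi[OF a] by simp
    qed
    show ?thesis unfolding s1 s2 by simp
  qed
  also have "\<dots> = (\<Sum>a<4::nat. x $ a * ((\<Sum>b<4. W $$ (a,b) * x $ b) - (\<Sum>b<4. W $$ (4*i+a,4*i+b) * x $ b)))
     - (\<Sum>a<4::nat. x $ a * ((\<Sum>b<4. W $$ (4*i+a,4*i+b) * x $ b) - (\<Sum>b<4. W $$ (4*i+a,4*i+b) * x $ b)))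
"
    by (simp only: right_diff_distrib sum_subtractf swapE)
  also have "\<dots> = (\<Sum>a<4. \<Sum>b<4. x $ a * (W $$ (a,b) - W $$ (4*i+a, 4*i+b)) * x $ b)"
    by (simp add: sum_distrib_left algebra_simps sum_subtractf)
  finally show ?thesis .
qed

lemma sum_split0: "(\<Sum>i<Suc l. h i) = h 0 + (\<Sum>i\<in>{1..l}. h i)"
  by (subst sum.lessThan_Suc_shift) (simp add: sum.atLeast1_atMost_eq)

definition Af :: "(nat \<Rightarrow> real mat) \<Rightarrow> (nat \<Rightarrow> real) \<Rightarrow> nat \<Rightarrow> nat \<Rightarrow> nat \<Rightarrow> real" where
  "Af Q csq i a b = Q i $$ (a,b) - csq i * (if a = b then 1 else 0)"

lemma bigQ_entry:
  assumes Qc: "\<forall>i\<in>{1..l}. Q i \<in> carrier_mat 4 4"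
    and i: "i < l+1" and j: "j < l+1" and a: "a < 4" and b: "b < 4"
  shows "bigQ l Q csq $$ (4*i+a, 4*j+b) = (if i = 0 \<and> 1 \<le> j then (1/2) * Af Q csq j a b
     else if j = 0 \<and> 1 \<le> i then (1/2) * Af Q csq i a b else 0)"
proof -
  have r: "4*i+a < 4*(l+1)" "4*j+b < 4*(l+1)" using i j a b by auto
  have Qi: "1 \<le> i \<Longrightarrow> Q i \<in> carrier_mat 4 4" using Qc i by auto
  have Qj: "1 \<le> j \<Longrightarrow> Q j \<in> carrier_mat 4 4" using Qc j by auto
  show ?thesis
    using r a b Qi Qj unfolding bigQ_def Af_def by (auto simp: Let_def)
qed

lemma obj_formula:
  fixes W :: "real mat"
  assumes W: "W \<in> carrier_mat (4*(l+1)) (4*(l+1))" and sy: "transpose_mat W = W" and c: "relax_constr l W"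
    and Qc: "\<forall>i\<in>{1..l}. Q i \<in> carrier_mat 4 4"
    and Qs: "\<forall>i\<in>{1..l}. \<forall>a<4. \<forall>b<4. Q i $$ (a,b) = Q i $$ (b,a)"
  shows "mtrace (bigQ l Q csq * W) = (\<Sum>i\<in>{1..l}. \<Sum>a<4. \<Sum>b<4. Af Q csq i a b * W $$ (4*i+a, 4*i+b))"
proof -
  define m where "m = l+1"
  define B where "B = bigQ l Q csq"
  have B: "B \<in> carrier_mat (4*m) (4*m)" by (simp add: B_def bigQ_def m_def)
  have Wm: "W \<in> carrier_mat (4*m) (4*m)" using W by (simp add: m_def)
  have Ws: "W $$ (r,s) = W $$ (s,r)" if "r < 4*m" "s < 4*m" for r s
  proof -
    have "transpose_mat W $$ (s,r) = W $$ (s,r)" using sy by simp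
    thus ?thesis using that Wm by simp
  qed
  have Afs: "Af Q csq i a b = Af Q csq i b a" if "i \<in> {1..l}" "a < 4" "b < 4" for i a b
    using Qs that by (auto simp: Af_def)
  have Be: "B $$ (4*i+a, 4*j+b) = (if i = 0 \<and> 1 \<le> j then (1/2) * Af Q csq j a b
     else if j = 0 \<and> 1 \<le> i then (1/2) * Af Q csq i a b else 0)"
    if "i < m" "j < m" "a < 4" "b < 4" for i j a b
    unfolding B_def by (rule bigQ_entry[OF Qc]) (use that in \<open>auto simp: m_def\<close>)
  define R where "R = (\<lambda>r. \<Sum>s<4*m. B $$ (r,s) * W $$ (s,r))"
  have "mtrace (B * W) = (\<Sum>r<4*m. R r)"
    unfolding mtrace_def R_def using B Wm
    by (intro sum.cong) (auto simp: scalar_prod_def lessThan_atLeast0 row_def col_def)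
  also have "\<dots> = (\<Sum>i<m. \<Sum>a<4::nat. R (4*i+a))" by (rule sum_blocks)
  also have "\<dots> = (\<Sum>a<4::nat. R a) + (\<Sum>i\<in>{1..l}. \<Sum>a<4::nat. R (4*i+a))"
    unfolding m_def using sum_split0[where l = l and h = "\<lambda>i. \<Sum>a<4::nat. R (4*i+a)"] by simp
  also have "(\<Sum>a<4::nat. R a) = (\<Sum>a<4::nat. \<Sum>j\<in>{1..l}. \<Sum>b<4::nat. (1/2) * Af Q csq j a b * W $$ (4*j+a, 4*j+b))"
  proof (rule sum.cong[OF refl])
    fix a assume "a \<in> {..<4::nat}"
    hence a: "a < 4" by simp
    have "R a = (\<Sum>j<m. \<Sum>b<4::nat. B $$ (a,4*j+b) * W $$ (4*j+b,a))"
      unfolding R_def by (rule sum_blocks)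
    also have "\<dots> = (\<Sum>b<4::nat. B $$ (a,b) * W $$ (b,a)) + (\<Sum>j\<in>{1..l}. \<Sum>b<4::nat. B $$ (a,4*j+b) * W $$ (4*j+b,a))"
      unfolding m_def using sum_split0[where l = l and h = "\<lambda>j. \<Sum>b<4::nat. B $$ (a,4*j+b) * W $$ (4*j+b,a)"] by simp
    also have "(\<Sum>b<4::nat. B $$ (a,b) * W $$ (b,a)) = 0"
      using Be[of 0 0 a] a by (simp add: m_def)
    also have "(\<Sum>j\<in>{1..l}. \<Sum>b<4::nat. B $$ (a,4*j+b) * W $$ (4*j+b,a)) = (\<Sum>j\<in>{1..l}. \<Sum>b<4::nat. (1/2) * Af Q csq j a b * W $$ (4*j+a, 4*j+b))"
    proof (intro sum.cong refl)
      fix j b assume j: "j \<in> {1..l}" and "b \<in> {..<4::nat}"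
      hence b: "b < 4" by simp
      have "B $$ (a,4*j+b) = (1/2) * Af Q csq j a b" using Be[of 0 j a b] a b j by (simp add: m_def)
      moreover have "W $$ (4*j+b,a) = W $$ (4*j+a, 4*j+b)"
        using Ws[of "4*j+b" a] constr_entry[OF c j a b] j a b by (simp add: m_def)
      ultimately show "B $$ (a,4*j+b) * W $$ (4*j+b,a) = (1/2) * Af Q csq j a b * W $$ (4*j+a, 4*j+b)" by simp
    qed
    finally show "R a = (\<Sum>j\<in>{1..l}. \<Sum>b<4::nat. (1/2) * Af Q csq j a b * W $$ (4*j+a, 4*j+b))" by simp
  qed
  also have "(\<Sum>i\<in>{1..l}. \<Sum>a<4::nat. R (4*i+a)) = (\<Sum>i\<in>{1..l}. \<Sum>a<4::nat. \<Sum>b<4::nat. (1/2) * Af Q csq i a b * W $$ (4*i+a, 4*i+b))"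
  proof (intro sum.cong refl)
    fix i a assume i: "i \<in> {1..l}" and "a \<in> {..<4::nat}"
    hence a: "a < 4" by simp
    have im: "i < m" "1 \<le> i" using i by (auto simp: m_def)
    have "R (4*i+a) = (\<Sum>j<m. \<Sum>b<4::nat. B $$ (4*i+a,4*j+b) * W $$ (4*j+b,4*i+a))"
      unfolding R_def by (rule sum_blocks)
    also have "\<dots> = (\<Sum>b<4::nat. B $$ (4*i+a,b) * W $$ (b,4*i+a)) + (\<Sum>j\<in>{1..l}. \<Sum>b<4::nat. B $$ (4*i+a,4*j+b) * W $$ (4*j+b,4*i+a))"
      unfolding m_def using sum_split0[where l = l and h = "\<lambda>j. \<Sum>b<4::nat. B $$ (4*i+a,4*j+b) * W $$ (4*j+b,4*i+a)"] by simp
    also have "(\<Sum>j\<in>{1..l}. \<Sum>b<4::nat. B $$ (4*i+a,4*j+b) * W $$ (4*j+b,4*i+a)) = 0"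
    proof (rule sum.neutral, rule ballI)
      fix j assume j: "j \<in> {1..l}"
      show "(\<Sum>b<4::nat. B $$ (4*i+a,4*j+b) * W $$ (4*j+b,4*i+a)) = 0"
        using Be[of i j a] im j a by (simp add: m_def)
    qed
    also have "(\<Sum>b<4::nat. B $$ (4*i+a,b) * W $$ (b,4*i+a)) = (\<Sum>b<4::nat. (1/2) * Af Q csq i a b * W $$ (4*i+a, 4*i+b))"
    proof (rule sum.cong[OF refl])
      fix b assume "b \<in> {..<4::nat}"
      hence b: "b < 4" by simp
      have "B $$ (4*i+a,b) = (1/2) * Af Q csq i a b" using Be[of i 0 a b] a b im by (simp add: m_def)
      moreover have "W $$ (b,4*i+a) = W $$ (4*i+a, 4*i+b)"
        using Ws[of "4*i+b" "4*i+a"] constr_entry[OF c i b a] im a b by (simp add: m_def)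
      ultimately show "B $$ (4*i+a,b) * W $$ (b,4*i+a) = (1/2) * Af Q csq i a b * W $$ (4*i+a, 4*i+b)" by simp
    qed
    finally show "R (4*i+a) = (\<Sum>b<4::nat. (1/2) * Af Q csq i a b * W $$ (4*i+a, 4*i+b))" by simp
  qed
  also have "(\<Sum>a<4::nat. \<Sum>j\<in>{1..l}. \<Sum>b<4::nat. (1/2) * Af Q csq j a b * W $$ (4*j+a, 4*j+b))
      = (\<Sum>j\<in>{1..l}. \<Sum>a<4::nat. \<Sum>b<4::nat. (1/2) * Af Q csq j a b * W $$ (4*j+a, 4*j+b))"
    by (rule sum.swap)
  also have "(\<Sum>j\<in>{1..l}. \<Sum>a<4::nat. \<Sum>b<4::nat. (1/2) * Af Q csq j a b * W $$ (4*j+a, 4*j+b))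
      + (\<Sum>i\<in>{1..l}. \<Sum>a<4::nat. \<Sum>b<4::nat. (1/2) * Af Q csq i a b * W $$ (4*i+a, 4*i+b))
      = (\<Sum>i\<in>{1..l}. \<Sum>a<4. \<Sum>b<4. Af Q csq i a b * W $$ (4*i+a, 4*i+b))"
    by (simp add: sum.distrib[symmetric] algebra_simps)
  finally show ?thesis unfolding B_def .
qed

lemma msum4_carrier: "msum4 f I \<in> carrier_mat 4 4" by (simp add: msum4_def)

lemma msum4_index: "a < 4 \<Longrightarrow> b < 4 \<Longrightarrow> msum4 f I $$ (a,b) = (\<Sum>i\<in>I. f i $$ (a,b))"
  by (simp add: msum4_def)

lemma msum4_qf:
  assumes fin: "finite I" and fc: "\<forall>i\<in>I. f i \<in> carrier_mat 4 4" and x: "x \<in> carrier_vec 4"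
  shows "x \<bullet> (msum4 f I *\<^sub>v x) = (\<Sum>i\<in>I. x \<bullet> (f i *\<^sub>v x))"
proof -
  have "x \<bullet> (msum4 f I *\<^sub>v x) = (\<Sum>a<4. \<Sum>b<4. x $ a * (\<Sum>i\<in>I. f i $$ (a,b)) * x $ b)"
    unfolding qf4[OF msum4_carrier x] by (intro sum.cong refl) (simp add: msum4_index)
  also have "\<dots> = (\<Sum>a<4. \<Sum>b<4. \<Sum>i\<in>I. x $ a * f i $$ (a,b) * x $ b)"
    by (simp add: sum_distrib_left sum_distrib_right)
  also have "\<dots> = (\<Sum>a<4. \<Sum>i\<in>I. \<Sum>b<4. x $ a * f i $$ (a,b) * x $ b)"
    by (rule sum.cong[OF refl], rule sum.swap)
  also have "\<dots> = (\<Sum>i\<in>I. \<Sum>a<4. \<Sum>b<4. x $ a * f i $$ (a,b) * x $ b)"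
    by (rule sum.swap)
  also have "\<dots> = (\<Sum>i\<in>I. x \<bullet> (f i *\<^sub>v x))"
    using fc x by (intro sum.cong refl) (simp add: qf4)
  finally show ?thesis .
qed

lemma symm_carrier: "symm n A \<Longrightarrow> A \<in> carrier_mat n n" unfolding symm_def by auto
lemma symm_entry: "symm n A \<Longrightarrow> i < n \<Longrightarrow> j < n \<Longrightarrow> A $$ (i,j) = A $$ (j,i)" unfolding symm_def by auto

lemma symm_transpose: "symm n A \<longleftrightarrow> A \<in> carrier_mat n n \<and> transpose_mat A = A"
proof
  assume s: "symm n A"
  have "transpose_mat A = A"
    by (rule eq_matI) (use s in \<open>auto simp: symm_def\<close>)
  thus "A \<in> carrier_mat n n \<and> transpose_mat A = A" using s by (simp add: symm_def)
next
  assume a: "A \<in> carrier_mat n n \<and> transpose_mat A = A"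
  show "symm n A" unfolding symm_def
  proof (intro conjI allI impI)
    fix i j assume ij: "i < n" "j < n"
    have Ac: "A \<in> carrier_mat n n" and At: "transpose_mat A = A" using a by auto
    have "transpose_mat A $$ (j,i) = A $$ (i,j)" using Ac ij by simp
    thus "A $$ (i,j) = A $$ (j,i)" unfolding At by simp
  qed (use a in simp)
qed

lemma msum4_symm: "(\<forall>i\<in>I. symm 4 (f i)) \<Longrightarrow> symm 4 (msum4 f I)"
  unfolding symm_def by (auto simp: msum4_carrier msum4_index intro!: sum.cong)

lemma symm_mat: "(\<And>a b. a < n \<Longrightarrow> b < n \<Longrightarrow> f a b = f b a) \<Longrightarrow> symm n (mat n n (\<lambda>(a,b). f a b))"
  unfolding symm_def by auto

definition frob :: "(nat \<Rightarrow> nat \<Rightarrow> real) \<Rightarrow> (nat \<Rightarrow> nat \<Rightarrow> real) \<Rightarrow> real" where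
  "frob M X = (\<Sum>a<4::nat. \<Sum>b<4::nat. M a b * X a b)"

lemma frob_psd:
  assumes T: "symm 4 T" and Tpsd: "\<And>x. x \<in> carrier_vec 4 \<Longrightarrow> 0 \<le> x \<bullet> (T *\<^sub>v x)"
    and Xpsd: "\<And>x. x \<in> carrier_vec 4 \<Longrightarrow> 0 \<le> (\<Sum>a<4. \<Sum>b<4. x $ a * X a b * x $ b)"
  shows "0 \<le> frob (\<lambda>a b. T $$ (a,b)) X"
  unfolding frob_def by (rule trace_psd[OF T _ Tpsd Xpsd]) simp

lemma frob_diff: "frob (\<lambda>a b. M a b - N a b) X = frob M X - frob N X"
  unfolding frob_def by (simp add: algebra_simps sum_subtractf)
lemma frob_diff2: "frob M (\<lambda>a b. X a b - Y a b) = frob M X - frob M Y"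
  unfolding frob_def by (simp add: algebra_simps sum_subtractf)
lemma frob_sum: "finite I \<Longrightarrow> frob (\<lambda>a b. \<Sum>i\<in>I. M i a b) X = (\<Sum>i\<in>I. frob (M i) X)"
  unfolding frob_def by (simp add: sum_distrib_right sum.swap[of _ I])

lemma outer_carrier: "outer v \<in> carrier_mat (dim_vec v) (dim_vec v)" by (simp add: outer_def)

lemma outer_mv: "x \<in> carrier_vec (dim_vec v) \<Longrightarrow> outer v *\<^sub>v x = (v \<bullet> x) \<cdot>\<^sub>v v"
  by (rule eq_vecI) (auto simp: outer_def mult_mat_vec_def scalar_prod_def row_def sum_distrib_left mult_ac)

lemma outer_qf: "x \<in> carrier_vec (dim_vec v) \<Longrightarrow> x \<bullet> (outer v *\<^sub>v x) = (v \<bullet> (x :: real vec))^2"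
  using outer_mv[of x v] by (simp add: power2_eq_square comm_scalar_prod[of x "dim_vec v" v])

lemma outer_transpose: "transpose_mat (outer v) = outer v"
  by (rule eq_matI) (auto simp: outer_def)

definition Pim :: "real vec \<Rightarrow> real mat" where "Pim w = 1\<^sub>m 4 - outer w"

lemma Pim_carrier: "w \<in> carrier_vec 4 \<Longrightarrow> Pim w \<in> carrier_mat 4 4"
  unfolding Pim_def using outer_carrier[of w] by auto

lemma Pim_symm: "w \<in> carrier_vec 4 \<Longrightarrow> symm 4 (Pim w)"
  unfolding symm_def Pim_def outer_def by auto

lemma Pim_mv: "w \<in> carrier_vec 4 \<Longrightarrow> x \<in> carrier_vec 4 \<Longrightarrow> Pim w *\<^sub>v x = x - (w \<bullet> x) \<cdot>\<^sub>v w"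
proof -
  assume w: "w \<in> carrier_vec 4" and x: "x \<in> carrier_vec 4"
  have "Pim w *\<^sub>v x = 1\<^sub>m 4 *\<^sub>v x - outer w *\<^sub>v x"
    unfolding Pim_def by (rule minus_mult_distrib_mat_vec) (use outer_carrier[of w] w x in auto)
  also have "\<dots> = x - (w \<bullet> x) \<cdot>\<^sub>v w" using outer_mv[of x w] w x by simp
  finally show ?thesis .
qed

lemma sandwich_qf:
  assumes w: "w \<in> carrier_vec 4" and G: "G \<in> carrier_mat 4 4" and x: "x \<in> carrier_vec 4"
  shows "x \<bullet> ((Pim w * G * Pim w) *\<^sub>v x) = (x - (w \<bullet> x) \<cdot>\<^sub>v w) \<bullet> (G *\<^sub>v (x - (w \<bullet> x) \<cdot>\<^sub>v w))"
proof -
  have P: "Pim w \<in> carrier_mat 4 4" by (rule Pim_carrier[OF w])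
  define u where "u = x - (w \<bullet> x) \<cdot>\<^sub>v w"
  have uc: "u \<in> carrier_vec 4" using x w by (simp add: u_def)
  have Pu: "Pim w *\<^sub>v x = u" using Pim_mv[OF w x] by (simp add: u_def)
  have "(Pim w * G * Pim w) *\<^sub>v x = Pim w *\<^sub>v (G *\<^sub>v u)"
    using P G x Pu by (simp add: assoc_mult_mat_vec[of _ 4 4 _ 4])
  hence "x \<bullet> ((Pim w * G * Pim w) *\<^sub>v x) = x \<bullet> (Pim w *\<^sub>v (G *\<^sub>v u))" by simp
  also have "\<dots> = (G *\<^sub>v u) \<bullet> (Pim w *\<^sub>v x)"
    by (rule sym_quad[OF P symm_entry[OF Pim_symm[OF w]] x mult_mat_vec_carrier[OF G uc]])
  also have "\<dots> = u \<bullet> (G *\<^sub>v u)" using Pu G uc by (simp add: comm_scalar_prod[of _ 4])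
  finally show ?thesis by (simp add: u_def)
qed

lemma transpose_sandwich:
  assumes w: "w \<in> carrier_vec 4" and G: "symm 4 G"
  shows "symm 4 (Pim w * G * Pim w)"
proof -
  have P: "Pim w \<in> carrier_mat 4 4" "transpose_mat (Pim w) = Pim w"
    using Pim_symm[OF w] unfolding symm_transpose by auto
  have Gc: "G \<in> carrier_mat 4 4" "transpose_mat G = G" using G unfolding symm_transpose by auto
  have "transpose_mat (Pim w * G * Pim w) = transpose_mat (Pim w) * transpose_mat (Pim w * G)"
    using P Gc by (simp add: transpose_mult[of _ 4 4 _ 4])
  also have "\<dots> = Pim w * (G * Pim w)" using P Gc by (simp add: transpose_mult[of _ 4 4 _ 4])
  also have "\<dots> = Pim w * G * Pim w" using P Gc by (simp add: assoc_mult_mat[of _ 4 4 _ 4 _ 4])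
  finally show ?thesis unfolding symm_transpose using P Gc by simp
qed

lemma qf_expand:
  fixes A :: "real mat"
  assumes A: "symm 4 A" and u: "u \<in> carrier_vec 4" and w: "w \<in> carrier_vec 4"
  shows "(u + t \<cdot>\<^sub>v w) \<bullet> (A *\<^sub>v (u + t \<cdot>\<^sub>v w)) = u \<bullet> (A *\<^sub>v u) + 2 * t * (u \<bullet> (A *\<^sub>v w)) + t^2 * (w \<bullet> (A *\<^sub>v w))"
proof -
  have Ac: "A \<in> carrier_mat 4 4" using symm_carrier[OF A] .
  have Au: "A *\<^sub>v u \<in> carrier_vec 4" and Aw: "A *\<^sub>v w \<in> carrier_vec 4" using Ac u w by auto
  have "A *\<^sub>v (u + t \<cdot>\<^sub>v w) = A *\<^sub>v u + t \<cdot>\<^sub>v (A *\<^sub>v w)"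
    using Ac u w by (simp add: mult_add_distrib_mat_vec[of A 4 4] mult_mat_vec[of A 4 4])
  hence "(u + t \<cdot>\<^sub>v w) \<bullet> (A *\<^sub>v (u + t \<cdot>\<^sub>v w)) = (u + t \<cdot>\<^sub>v w) \<bullet> (A *\<^sub>v u + t \<cdot>\<^sub>v (A *\<^sub>v w))" by simp
  also have "\<dots> = u \<bullet> (A *\<^sub>v u) + t * (u \<bullet> (A *\<^sub>v w)) + t * (w \<bullet> (A *\<^sub>v u)) + t^2 * (w \<bullet> (A *\<^sub>v w))"
    using u w Au Aw by (simp add: add_scalar_prod_distrib[of _ 4] scalar_prod_add_distrib[of _ 4] power2_eq_square algebra_simps)
  also have "w \<bullet> (A *\<^sub>v u) = u \<bullet> (A *\<^sub>v w)" by (rule sym_quad[OF Ac symm_entry[OF A] w u])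
  finally show ?thesis by simp
qed

lemma norm_expand:
  assumes u: "u \<in> carrier_vec 4" and w: "w \<in> carrier_vec 4"
  shows "(u + t \<cdot>\<^sub>v w) \<bullet> (u + t \<cdot>\<^sub>v w) = u \<bullet> u + 2 * t * (u \<bullet> w) + t^2 * (w \<bullet> (w :: real vec))"
  using u w by (simp add: add_scalar_prod_distrib[of _ 4] scalar_prod_add_distrib[of _ 4] power2_eq_square algebra_simps
      comm_scalar_prod[of w 4 u])

lemma decomp:
  fixes x w :: "real vec"
  assumes x: "x \<in> carrier_vec 4" and w: "w \<in> carrier_vec 4" and ww: "w \<bullet> w = 1"
  shows "x = (x - (w \<bullet> x) \<cdot>\<^sub>v w) + (w \<bullet> x) \<cdot>\<^sub>v w" and "(x - (w \<bullet> x) \<cdot>\<^sub>v w) \<bullet> w = 0"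
proof -
  show "x = (x - (w \<bullet> x) \<cdot>\<^sub>v w) + (w \<bullet> x) \<cdot>\<^sub>v w"
    by (rule eq_vecI) (use x w in \<open>auto simp: algebra_simps\<close>)
  show "(x - (w \<bullet> x) \<cdot>\<^sub>v w) \<bullet> w = 0"
    using x w ww by (simp add: minus_scalar_prod_distrib[of _ 4] comm_scalar_prod[of x 4 w])
qed

lemma qf_minus:
  assumes A: "A \<in> carrier_mat 4 4" and B: "B \<in> carrier_mat 4 4" and v: "v \<in> carrier_vec 4"
  shows "v \<bullet> ((A - B) *\<^sub>v v) = v \<bullet> (A *\<^sub>v v) - v \<bullet> (B *\<^sub>v (v :: real vec))"
proof -
  have AB: "A - B \<in> carrier_mat 4 4" using B by (rule minus_carrier_mat)
  show ?thesis unfolding qf4[OF AB v] qf4[OF A v] qf4[OF B v] sum4 using A B by (simp add: algebra_simps)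
qed

lemma qf_add:
  assumes A: "A \<in> carrier_mat 4 4" and B: "B \<in> carrier_mat 4 4" and v: "v \<in> carrier_vec 4"
  shows "v \<bullet> ((A + B) *\<^sub>v v) = v \<bullet> (A *\<^sub>v v) + v \<bullet> (B *\<^sub>v (v :: real vec))"
proof -
  have AB: "A + B \<in> carrier_mat 4 4" using A B by simp
  show ?thesis unfolding qf4[OF AB v] qf4[OF A v] qf4[OF B v] sum4 using A B by (simp add: algebra_simps)
qed

lemma qf_msmult:
  assumes A: "A \<in> carrier_mat 4 4" and v: "v \<in> carrier_vec 4"
  shows "v \<bullet> ((c \<cdot>\<^sub>m A) *\<^sub>v v) = c * (v \<bullet> (A *\<^sub>v (v :: real vec)))"
proof -
  have AB: "c \<cdot>\<^sub>m A \<in> carrier_mat 4 4" using A by simp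
  show ?thesis unfolding qf4[OF AB v] qf4[OF A v] sum4 using A by (simp add: algebra_simps)
qed

lemma qf_one: "v \<in> carrier_vec 4 \<Longrightarrow> v \<bullet> (1\<^sub>m 4 *\<^sub>v v) = v \<bullet> (v :: real vec)"
  by simp

lemma symm_minus: "symm 4 A \<Longrightarrow> symm 4 B \<Longrightarrow> symm 4 (A - B)"
  unfolding symm_def by (auto simp: minus_carrier_mat)
lemma symm_add: "symm 4 A \<Longrightarrow> symm 4 B \<Longrightarrow> symm 4 (A + B)"
  unfolding symm_def by auto
lemma symm_smult: "symm 4 A \<Longrightarrow> symm 4 (c \<cdot>\<^sub>m A)"
  unfolding symm_def by auto
lemma symm_one: "symm 4 (1\<^sub>m 4)"
  unfolding symm_def by auto

lemma cert_arith:
  fixes t nu n c q dd L c1 lam kk sS qQ qw :: real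
  assumes nu: "0 \<le> nu" and n: "0 \<le> n" and qw: "\<bar>qw\<bar> \<le> nu * n" and c1: "0 \<le> c1"
    and M: "kk * qQ - sS \<le> L * nu^2" and kk: "0 < kk"
    and dd: "dd = lam / kk - q + c1 * L"
    and c: "q + n + (\<bar>dd\<bar> + dd)/2 < c"
  shows "0 \<le> (c1 * sS + (1/kk - c1) * kk * qQ - lam / kk * nu^2) - (qQ + 2 * t * qw + t^2 * q) + c * (nu^2 + t^2)"
proof -
  have e: "(c1 * sS + (1/kk - c1) * kk * qQ - lam / kk * nu^2) - (qQ + 2 * t * qw + t^2 * q) + c * (nu^2 + t^2)
     = t^2 * (c - q - n) + nu^2 * (c - lam/kk - c1 * L - n) + c1 * (L * nu^2 - (kk * qQ - sS)) + (n * (t^2 + nu^2) - 2 * t * qw)"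
    using kk by (simp add: field_simps power2_eq_square)
  have h0: "0 \<le> (\<bar>dd\<bar> + dd)/2" "dd \<le> (\<bar>dd\<bar> + dd)/2" by auto
  have "0 \<le> c - q - n" using c h0 by linarith
  hence a1: "0 \<le> t^2 * (c - q - n)" by simp
  have "0 \<le> c - lam/kk - c1 * L - n" using c h0 dd by linarith
  hence a2: "0 \<le> nu^2 * (c - lam/kk - c1 * L - n)" by simp
  have "0 \<le> L * nu^2 - (kk * qQ - sS)" using M by linarith
  hence a3: "0 \<le> c1 * (L * nu^2 - (kk * qQ - sS))" using c1 by simp
  have "2 * t * qw \<le> 2 * \<bar>t\<bar> * \<bar>qw\<bar>" by (metis abs_ge_self abs_mult mult.assoc mult_le_cancel_left_pos zero_less_numeral abs_of_nonneg zero_le_numeral)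
  also have "\<dots> \<le> 2 * \<bar>t\<bar> * (nu * n)" using qw by (intro mult_left_mono) auto
  also have "\<dots> \<le> n * (t^2 + nu^2)"
  proof -
    have "0 \<le> (\<bar>t\<bar> - nu)^2" by simp
    hence "2 * \<bar>t\<bar> * nu \<le> t^2 + nu^2" by (simp add: power2_eq_square algebra_simps)
    thus ?thesis using n by (metis mult.commute mult.left_commute mult_left_mono)
  qed
  finally have a4: "0 \<le> n * (t^2 + nu^2) - 2 * t * qw" by simp
  show ?thesis unfolding e using a1 a2 a3 a4 by linarith
qed

lemma v_arith:
  fixes c1 zeta lam uu kk sS qQ bt :: real
  assumes c1: "0 \<le> c1" and bt: "0 \<le> bt" and kk: "2 \<le> kk" and qQ: "0 \<le> qQ" and uu: "0 \<le> uu"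
    and lam: "0 \<le> lam" and sS: "zeta * lam * uu \<le> sS" and cz: "c1 * zeta = 1 / (kk - 1)"
  shows "0 \<le> c1 * sS + bt * kk * qQ - lam / kk * uu"
proof -
  have "c1 * (zeta * lam * uu) \<le> c1 * sS" using sS c1 by (rule mult_left_mono)
  moreover have "c1 * (zeta * lam * uu) = (c1 * zeta) * (lam * uu)" by (simp add: mult_ac)
  hence "c1 * (zeta * lam * uu) = lam * uu / (kk - 1)" using cz by simp
  moreover have "lam / kk * uu \<le> lam * uu / (kk - 1)"
  proof -
    have "lam * uu / kk \<le> lam * uu / (kk - 1)" using kk lam uu by (intro divide_left_mono) (auto intro: mult_nonneg_nonneg)
    thus ?thesis by simp
  qed
  moreover have "0 \<le> bt * kk * qQ" using bt kk qQ by auto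
  ultimately show ?thesis by linarith
qed

theorem theorem3p9:
  fixes l ks :: nat
    and x y eps :: "nat \<Rightarrow> real vec"
    and csq :: "nat \<Rightarrow> real"
    and R0 :: "real mat" and w0s w0h :: "real vec"
  defines "Q \<equiv> (\<lambda>i. Qmat (y i) (x i))"
      and "P \<equiv> (\<lambda>i. Pmat R0 (x i))"
  defines "S \<equiv> msum4 Q {1..ks}"
  defines "zeta \<equiv> lam_min2 S / lam_min S"
  defines "d \<equiv> (\<lambda>i. (\<Sum>k=1..ks. w0h \<bullet> (Q k *\<^sub>v w0h)) / real ks - w0h \<bullet> (Q i *\<^sub>v w0h)
                    + lam_max (msum4 (\<lambda>j. Q i - Q j) ({1..ks} - {i})) / (zeta * (real ks - 1)))"
  assumes R0: "R0 \<in> SO3" and w0s: "unit_quat w0s" "rotR w0s = R0"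
    and ks: "2 \<le> ks" "ks \<le> l"
    and xy: "\<forall>i\<in>{1..l}. x i \<in> carrier_vec 3 \<and> y i \<in> carrier_vec 3"
    and inl: "\<forall>i\<in>{1..ks}. eps i \<in> carrier_vec 3 \<and> y i = R0 *\<^sub>v x i + eps i"
    and c_nonneg: "\<forall>i\<in>{1..l}. 0 \<le> csq i"
    and w0h: "tls_global_min l Q csq w0h"
    and A1: "zeta \<ge> real ks / (real ks - 1)"
    and A2: "\<forall>j\<in>{ks+1..l}. 0 < csq j \<and> csq j < lam_min (Q j)"
    and A3: "\<forall>i\<in>{1..ks}. csq i > w0h \<bullet> (Q i *\<^sub>v w0h) + vnorm (Q i *\<^sub>v w0h) + (\<bar>d i\<bar> + d i) / 2"
  shows "sdr_tight l Q csq \<and>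
         (lam_min2 (msum4 P {1..ks}) > 0 \<longrightarrow>
          1 - (w0h \<bullet> w0s)\<^sup>2 \<le> 4 * (\<Sum>i=1..ks. vnorm (eps i) * vnorm (x i)) / lam_min2 (msum4 P {1..ks}))"
proof -
  have xc: "x i \<in> carrier_vec 3" "y i \<in> carrier_vec 3" if "i \<in> {1..l}" for i using xy that by auto
  have R0c: "R0 \<in> carrier_mat 3 3" using R0 unfolding SO3_def by auto
  have QE_eq: "Q i = QE (y i) (x i)" if "i \<in> {1..l}" for i
    using Qmat_QE[OF xc[OF that]] by (simp add: Q_def)
  have Qc: "Q i \<in> carrier_mat 4 4" if "i \<in> {1..l}" for i using QE_eq[OF that] QE_carrier by simp
  have Qsym: "symm 4 (Q i)" if "i \<in> {1..l}" for i
    unfolding QE_eq[OF that] symm_def using QE_carrier QE_sym by auto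
  have Qpsd: "0 \<le> v \<bullet> (Q i *\<^sub>v v)" if "i \<in> {1..l}" "v \<in> carrier_vec 4" for i v
    unfolding QE_eq[OF that(1)] by (rule QE_psd[OF xc[OF that(1)] that(2)])
  have Qunit: "v \<bullet> (Q i *\<^sub>v v) = (vnorm (y i - rotR v *\<^sub>v x i))^2" if "i \<in> {1..l}" "unit_quat v" for i v
    unfolding QE_eq[OF that(1)] by (rule QE_unit[OF xc[OF that(1)] that(2)])
  have kl: "{1..ks} \<subseteq> {1..l}" using ks by auto
  have Sc: "S \<in> carrier_mat 4 4" unfolding S_def by (rule msum4_carrier)
  have Ssym: "symm 4 S" unfolding S_def by (rule msum4_symm) (use Qsym kl in auto)
  have Sqf: "v \<bullet> (S *\<^sub>v v) = (\<Sum>i\<in>{1..ks}. v \<bullet> (Q i *\<^sub>v v))" if "v \<in> carrier_vec 4" for v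
    unfolding S_def by (rule msum4_qf) (use Qc kl that in auto)
  have wu: "unit_quat w0h" and wmin: "\<And>w'. unit_quat w' \<Longrightarrow> tls_obj l Q csq w0h \<le> tls_obj l Q csq w'"
    using w0h unfolding tls_global_min_def by auto
  have wc: "w0h \<in> carrier_vec 4" and ww: "w0h \<bullet> w0h = 1" using wu unfolding unit_quat_def by auto
  define lam where "lam = w0h \<bullet> (S *\<^sub>v w0h)"
  define q where "q = (\<lambda>i. w0h \<bullet> (Q i *\<^sub>v w0h))"
  have lam_q: "lam = (\<Sum>i\<in>{1..ks}. q i)" unfolding lam_def q_def using Sqf[OF wc] .
  have dpos: "0 \<le> (\<bar>d i\<bar> + d i) / 2" for i by simp
  have q_lt: "q i + vnorm (Q i *\<^sub>v w0h) + (\<bar>d i\<bar> + d i) / 2 < csq i" if "i \<in> {1..ks}" for i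
    using A3 that unfolding q_def by auto
  have q_lt': "q i < csq i" if "i \<in> {1..ks}" for i
    using q_lt[OF that] vnorm_nonneg[of "Q i *\<^sub>v w0h"] dpos[of i] by linarith
  have out_lt: "csq j < v \<bullet> (Q j *\<^sub>v v)" if "j \<in> {ks+1..l}" "unit_quat v" for j v
  proof -
    have j: "j \<in> {1..l}" using that ks by auto
    have vc: "v \<in> carrier_vec 4" "v \<bullet> v = 1" using that(2) unfolding unit_quat_def by auto
    have "lam_min (Q j) * (v \<bullet> v) \<le> v \<bullet> (Q j *\<^sub>v v)" by (rule lam_min_le[OF Qsym[OF j]]) (use vc in auto)
    thus ?thesis using A2 that(1) vc by fastforce
  qed
  have split: "(\<Sum>i\<in>{1..l}. f i) = (\<Sum>i\<in>{1..ks}. f i) + (\<Sum>i\<in>{ks+1..l}. f i)" for f :: "nat \<Rightarrow> real"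
  proof -
    have "{1..l} = {1..ks} \<union> {ks+1..l}" using ks by auto
    moreover have "{1..ks} \<inter> {ks+1..l} = {}" by auto
    ultimately show ?thesis by (simp add: sum.union_disjoint)
  qed
  define cout where "cout = (\<Sum>j\<in>{ks+1..l}. csq j)"
  have tls_w0h: "tls_obj l Q csq w0h = lam + cout"
  proof -
    have "tls_obj l Q csq w0h = (\<Sum>i\<in>{1..ks}. min (q i) (csq i)) + (\<Sum>i\<in>{ks+1..l}. min (q i) (csq i))"
      unfolding tls_obj_def q_def by (rule split)
    also have "(\<Sum>i\<in>{1..ks}. min (q i) (csq i)) = (\<Sum>i\<in>{1..ks}. q i)"
      by (intro sum.cong refl) (use q_lt' in force)
    also have "(\<Sum>i\<in>{ks+1..l}. min (q i) (csq i)) = cout"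
      unfolding cout_def by (intro sum.cong refl) (use out_lt[OF _ wu] in \<open>force simp: q_def\<close>)
    finally show ?thesis using lam_q by simp
  qed
  have tls_le: "tls_obj l Q csq v \<le> v \<bullet> (S *\<^sub>v v) + cout" if "unit_quat v" for v
  proof -
    have vc: "v \<in> carrier_vec 4" using that unfolding unit_quat_def by auto
    have "tls_obj l Q csq v = (\<Sum>i\<in>{1..ks}. min (v \<bullet> (Q i *\<^sub>v v)) (csq i)) + (\<Sum>i\<in>{ks+1..l}. min (v \<bullet> (Q i *\<^sub>v v)) (csq i))"
      unfolding tls_obj_def by (rule split)
    also have "\<dots> \<le> (\<Sum>i\<in>{1..ks}. v \<bullet> (Q i *\<^sub>v v)) + cout"
      unfolding cout_def by (intro add_mono sum_mono) auto
    finally show ?thesis using Sqf[OF vc] by simp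
  qed
  have lam_le: "lam \<le> v \<bullet> (S *\<^sub>v v)" if "unit_quat v" for v
    using wmin[OF that] tls_w0h tls_le[OF that] by simp
  have lmS: "lam_min S = lam"
  proof (rule lam_min_eq[OF Ssym])
    show "\<And>v. v \<in> carrier_vec 4 \<Longrightarrow> v \<bullet> v = 1 \<Longrightarrow> lam \<le> v \<bullet> (S *\<^sub>v v)"
      using lam_le unfolding unit_quat_def by auto
  qed (use wc ww lam_def in auto)
  have Sw: "S *\<^sub>v w0h = lam \<cdot>\<^sub>v w0h"
    using lam_min_vec(1)[OF Ssym _ wc ww] lmS lam_def by auto
  have S2: "lam_min2 S * (u \<bullet> u) \<le> u \<bullet> (S *\<^sub>v u)" if "u \<in> carrier_vec 4" "u \<bullet> w0h = 0" for u
    using lam_min_vec(2)[OF Ssym _ wc ww _ that] lmS lam_def by auto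
  have lam_nn: "0 \<le> lam" unfolding lam_q q_def using Qpsd wc kl by (auto intro!: sum_nonneg)
  have kk: "2 \<le> real ks" using ks by simp
  have zeta_pos: "zeta > 0"
  proof -
    have "real ks / (real ks - 1) > 0" using kk by simp
    thus ?thesis using A1 by linarith
  qed
  have lam_pos: "lam > 0"
  proof (rule ccontr)
    assume "\<not> lam > 0"
    hence "lam = 0" using lam_nn by simp
    hence "zeta = 0" unfolding zeta_def using lmS by simp
    thus False using zeta_pos by simp
  qed
  have l2: "lam_min2 S = zeta * lam" using lam_pos lmS unfolding zeta_def by simp
  have part2: "lam_min2 (msum4 P {1..ks}) > 0 \<longrightarrow>
          1 - (w0h \<bullet> w0s)\<^sup>2 \<le> 4 * (\<Sum>i=1..ks. vnorm (eps i) * vnorm (x i)) / lam_min2 (msum4 P {1..ks})"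
  proof
    assume pos: "lam_min2 (msum4 P {1..ks}) > 0"
    define Pm where "Pm = msum4 P {1..ks}"
    have w0sc: "w0s \<in> carrier_vec 4" "w0s \<bullet> w0s = 1" using w0s(1) unfolding unit_quat_def by auto
    have xk: "x i \<in> carrier_vec 3" "y i \<in> carrier_vec 3" if "i \<in> {1..ks}" for i using xc kl that by auto
    have R0x: "R0 *\<^sub>v x i \<in> carrier_vec 3" if "i \<in> {1..ks}" for i using R0c xk[OF that] by auto
    have PE: "P i = QE (R0 *\<^sub>v x i) (x i)" if "i \<in> {1..ks}" for i
      unfolding P_def Pmat_Qmat using Qmat_QE[OF xk(1)[OF that] R0x[OF that]] by simp
    have Pc: "P i \<in> carrier_mat 4 4" if "i \<in> {1..ks}" for i using PE[OF that] QE_carrier by simp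
    have Psym: "symm 4 (P i)" if "i \<in> {1..ks}" for i
      unfolding PE[OF that] symm_def using QE_carrier QE_sym by auto
    have Ppsd: "0 \<le> v \<bullet> (P i *\<^sub>v v)" if "i \<in> {1..ks}" "v \<in> carrier_vec 4" for i v
      unfolding PE[OF that(1)] by (rule QE_psd[OF xk(1)[OF that(1)] R0x[OF that(1)] that(2)])
    have Punit: "v \<bullet> (P i *\<^sub>v v) = (vnorm (R0 *\<^sub>v x i - rotR v *\<^sub>v x i))^2" if "i \<in> {1..ks}" "unit_quat v" for i v
      unfolding PE[OF that(1)] by (rule QE_unit[OF xk(1)[OF that(1)] R0x[OF that(1)] that(2)])
    have Pmsym: "symm 4 Pm" unfolding Pm_def by (rule msum4_symm) (use Psym in auto)
    have Pmqf: "v \<bullet> (Pm *\<^sub>v v) = (\<Sum>i\<in>{1..ks}. v \<bullet> (P i *\<^sub>v v))" if "v \<in> carrier_vec 4" for v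
      unfolding Pm_def by (rule msum4_qf) (use Pc that in auto)
    have Pm_psd: "0 \<le> v \<bullet> (Pm *\<^sub>v v)" if "v \<in> carrier_vec 4" for v
      unfolding Pmqf[OF that] by (rule sum_nonneg) (use Ppsd that in auto)
    have Pm_w0s: "w0s \<bullet> (Pm *\<^sub>v w0s) = 0"
    proof -
      have "w0s \<bullet> (P i *\<^sub>v w0s) = 0" if "i \<in> {1..ks}" for i
      proof -
        have "R0 *\<^sub>v x i - rotR w0s *\<^sub>v x i = 0\<^sub>v 3" using w0s(2) R0x[OF that] by auto
        thus ?thesis using Punit[OF that w0s(1)] by (simp add: vnorm_def)
      qed
      thus ?thesis unfolding Pmqf[OF w0sc(1)] by simp
    qed
    have lmP: "lam_min Pm = 0"
      by (rule lam_min_eq[OF Pmsym]) (use Pm_psd w0sc Pm_w0s in auto)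
    have Pw: "Pm *\<^sub>v w0s = 0 \<cdot>\<^sub>v w0s"
      using lam_min_vec(1)[OF Pmsym _ w0sc] lmP Pm_w0s by simp
    have P2: "lam_min2 Pm * (u \<bullet> u) \<le> u \<bullet> (Pm *\<^sub>v u)" if "u \<in> carrier_vec 4" "u \<bullet> w0s = 0" for u
      using lam_min_vec(2)[OF Pmsym _ w0sc _ that] lmP Pm_w0s by simp
    define t where "t = w0s \<bullet> w0h"
    define u where "u = w0h - t \<cdot>\<^sub>v w0s"
    have uc: "u \<in> carrier_vec 4" using wc w0sc by (simp add: u_def)
    have uw: "u \<bullet> w0s = 0" using decomp(2)[OF wc w0sc(1,2)] by (simp add: u_def t_def)
    have wdec: "w0h = u + t \<cdot>\<^sub>v w0s" using decomp(1)[OF wc w0sc(1,2)] by (simp add: u_def t_def)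
    have uu: "u \<bullet> u = 1 - t^2"
      using norm_expand[OF uc w0sc(1), of t] wdec ww uw w0sc by simp
    have qfeq: "w0h \<bullet> (Pm *\<^sub>v w0h) = u \<bullet> (Pm *\<^sub>v u)"
    proof -
      have "w0h \<bullet> (Pm *\<^sub>v w0h) = u \<bullet> (Pm *\<^sub>v u) + 2 * t * (u \<bullet> (Pm *\<^sub>v w0s)) + t^2 * (w0s \<bullet> (Pm *\<^sub>v w0s))"
        using qf_expand[OF Pmsym uc w0sc(1), of t] wdec by simp
      thus ?thesis using Pw Pm_w0s uc w0sc(1) by simp
    qed
    have low: "lam_min2 Pm * (1 - t^2) \<le> w0h \<bullet> (Pm *\<^sub>v w0h)"
      using P2[OF uc uw] uu qfeq by simp
    have up: "w0h \<bullet> (Pm *\<^sub>v w0h) \<le> 4 * (\<Sum>i=1..ks. vnorm (eps i) * vnorm (x i))"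
    proof -
      define dl where "dl = (\<lambda>i. R0 *\<^sub>v x i - rotR w0h *\<^sub>v x i)"
      have dlc: "dl i \<in> carrier_vec 3" if "i \<in> {1..ks}" for i
        using R0x[OF that] rotR_carrier[of w0h] xk[OF that] by (auto simp: dl_def)
      have ec: "eps i \<in> carrier_vec 3" and yeq: "y i = R0 *\<^sub>v x i + eps i" if "i \<in> {1..ks}" for i
        using inl that by auto
      have Qw0h: "w0h \<bullet> (Q i *\<^sub>v w0h) = eps i \<bullet> eps i + 2 * (eps i \<bullet> dl i) + dl i \<bullet> dl i" if i: "i \<in> {1..ks}" for i
      proof -
        have i': "i \<in> {1..l}" using i kl by auto
        have "y i - rotR w0h *\<^sub>v x i = eps i + dl i"
          by (rule eq_vecI) (use yeq[OF i] ec[OF i] dlc[OF i] R0x[OF i] rotR_carrier[of w0h] xk[OF i] in \<open>auto simp: dl_def\<close>)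
        hence "w0h \<bullet> (Q i *\<^sub>v w0h) = (eps i + dl i) \<bullet> (eps i + dl i)"
          using Qunit[OF i' wu] vnorm_sq by simp
        also have "\<dots> = eps i \<bullet> eps i + 2 * (eps i \<bullet> dl i) + dl i \<bullet> dl i"
          using ec[OF i] dlc[OF i] by (simp add: add_scalar_prod_distrib[of _ 3] scalar_prod_add_distrib[of _ 3] comm_scalar_prod[of "dl i" 3 "eps i"])
        finally show ?thesis .
      qed
      have Qw0s: "w0s \<bullet> (Q i *\<^sub>v w0s) = eps i \<bullet> eps i" if i: "i \<in> {1..ks}" for i
      proof -
        have i': "i \<in> {1..l}" using i kl by auto
        have "y i - rotR w0s *\<^sub>v x i = (R0 *\<^sub>v x i + eps i) - R0 *\<^sub>v x i" using yeq[OF i] w0s(2) by simp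
        also have "\<dots> = eps i" by (rule eq_vecI) (use ec[OF i] R0x[OF i] R0c in auto)
        finally have "y i - rotR w0s *\<^sub>v x i = eps i" .
        thus ?thesis using Qunit[OF i' w0s(1)] vnorm_sq by simp
      qed
      have Pw0h: "w0h \<bullet> (P i *\<^sub>v w0h) = dl i \<bullet> dl i" if i: "i \<in> {1..ks}" for i
        using Punit[OF i wu] vnorm_sq by (simp add: dl_def)
      have dl_le: "vnorm (dl i) \<le> 2 * vnorm (x i)" if i: "i \<in> {1..ks}" for i
      proof -
        have a: "(R0 *\<^sub>v x i) \<bullet> (R0 *\<^sub>v x i) = x i \<bullet> x i"
          using rot_sq[OF xk(1)[OF i] w0sc(1)] w0sc(2) w0s(2) by simp
        have b: "(rotR w0h *\<^sub>v x i) \<bullet> (rotR w0h *\<^sub>v x i) = x i \<bullet> x i"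
          using rot_sq[OF xk(1)[OF i] wc] ww by simp
        have bc: "rotR w0h *\<^sub>v x i \<in> carrier_vec 3" using rotR_carrier[of w0h] xk[OF i] by auto
        have "\<bar>(R0 *\<^sub>v x i) \<bullet> (rotR w0h *\<^sub>v x i)\<bar> \<le> vnorm (R0 *\<^sub>v x i) * vnorm (rotR w0h *\<^sub>v x i)"
          by (rule cs_abs[of _ 3]) (use R0c rotR_carrier[of w0h] in auto)
        also have "\<dots> = x i \<bullet> x i" using a b sp_self_nonneg[of "x i"] by (simp add: vnorm_def)
        finally have ab: "\<bar>(R0 *\<^sub>v x i) \<bullet> (rotR w0h *\<^sub>v x i)\<bar> \<le> x i \<bullet> x i" .
        have "dl i \<bullet> dl i = (R0 *\<^sub>v x i) \<bullet> (R0 *\<^sub>v x i) - 2 * ((R0 *\<^sub>v x i) \<bullet> (rotR w0h *\<^sub>v x i)) + (rotR w0h *\<^sub>v x i) \<bullet> (rotR w0h *\<^sub>v x i)"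
        proof -
          have ba: "(rotR w0h *\<^sub>v x i) \<bullet> (R0 *\<^sub>v x i) = (R0 *\<^sub>v x i) \<bullet> (rotR w0h *\<^sub>v x i)"
            by (rule comm_scalar_prod[OF bc R0x[OF i]])
          have "dl i \<bullet> dl i = (R0 *\<^sub>v x i) \<bullet> (R0 *\<^sub>v x i - rotR w0h *\<^sub>v x i) - (rotR w0h *\<^sub>v x i) \<bullet> (R0 *\<^sub>v x i - rotR w0h *\<^sub>v x i)"
            unfolding dl_def by (rule minus_scalar_prod_distrib[OF R0x[OF i] bc]) (use R0x[OF i] bc in simp)
          also have "\<dots> = (R0 *\<^sub>v x i) \<bullet> (R0 *\<^sub>v x i) - (R0 *\<^sub>v x i) \<bullet> (rotR w0h *\<^sub>v x i) - ((rotR w0h *\<^sub>v x i) \<bullet> (R0 *\<^sub>v x i) - (rotR w0h *\<^sub>v x i) \<bullet> (rotR w0h *\<^sub>v x i))"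
            by (simp only: scalar_prod_minus_distrib[OF R0x[OF i] R0x[OF i] bc] scalar_prod_minus_distrib[OF bc R0x[OF i] bc])
          finally show ?thesis unfolding ba by simp
        qed
        also have "\<dots> \<le> 4 * (x i \<bullet> x i)" using a b ab by linarith
        finally have "dl i \<bullet> dl i \<le> 4 * (x i \<bullet> x i)" .
        hence "sqrt (dl i \<bullet> dl i) \<le> sqrt (4 * (x i \<bullet> x i))" by (rule real_sqrt_le_mono)
        also have "\<dots> = 2 * vnorm (x i)" by (simp add: vnorm_def real_sqrt_mult)
        finally show ?thesis by (simp add: vnorm_def)
      qed
      have "lam \<le> w0s \<bullet> (S *\<^sub>v w0s)" by (rule lam_le[OF w0s(1)])
      hence "(\<Sum>i\<in>{1..ks}. eps i \<bullet> eps i + 2 * (eps i \<bullet> dl i) + dl i \<bullet> dl i) \<le> (\<Sum>i\<in>{1..ks}. eps i \<bullet> eps i)"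
        unfolding lam_q q_def Sqf[OF w0sc(1)] using Qw0h Qw0s by simp
      hence "(\<Sum>i\<in>{1..ks}. eps i \<bullet> eps i) + (\<Sum>i\<in>{1..ks}. 2 * (eps i \<bullet> dl i)) + (\<Sum>i\<in>{1..ks}. dl i \<bullet> dl i) \<le> (\<Sum>i\<in>{1..ks}. eps i \<bullet> eps i)"
        by (simp only: sum.distrib)
      moreover have "(\<Sum>i\<in>{1..ks}. 2 * (eps i \<bullet> dl i)) = 2 * (\<Sum>i\<in>{1..ks}. eps i \<bullet> dl i)"
        by (simp add: sum_distrib_left)
      ultimately have dd: "(\<Sum>i\<in>{1..ks}. dl i \<bullet> dl i) \<le> - 2 * (\<Sum>i\<in>{1..ks}. eps i \<bullet> dl i)"
        by linarith
      have "- (\<Sum>i\<in>{1..ks}. eps i \<bullet> dl i) \<le> (\<Sum>i\<in>{1..ks}. vnorm (eps i) * vnorm (dl i))"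
        unfolding sum_negf[symmetric]
      proof (rule sum_mono)
        fix i assume i: "i \<in> {1..ks}"
        have "\<bar>eps i \<bullet> dl i\<bar> \<le> vnorm (eps i) * vnorm (dl i)" by (rule cs_abs) (use ec[OF i] dlc[OF i] in auto)
        thus "- (eps i \<bullet> dl i) \<le> vnorm (eps i) * vnorm (dl i)" by linarith
      qed
      also have "\<dots> \<le> (\<Sum>i\<in>{1..ks}. vnorm (eps i) * (2 * vnorm (x i)))"
        by (intro sum_mono mult_left_mono) (use dl_le vnorm_nonneg in auto)
      finally have ed: "- (\<Sum>i\<in>{1..ks}. eps i \<bullet> dl i) \<le> 2 * (\<Sum>i\<in>{1..ks}. vnorm (eps i) * vnorm (x i))"
        by (simp add: sum_distrib_left mult_ac)
      have "w0h \<bullet> (Pm *\<^sub>v w0h) = (\<Sum>i\<in>{1..ks}. dl i \<bullet> dl i)" unfolding Pmqf[OF wc] using Pw0h by simp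
      thus ?thesis using dd ed by linarith
    qed
    have "1 - t^2 \<le> w0h \<bullet> (Pm *\<^sub>v w0h) / lam_min2 Pm"
      using low pos unfolding Pm_def by (simp add: pos_le_divide_eq mult.commute)
    also have "\<dots> \<le> 4 * (\<Sum>i=1..ks. vnorm (eps i) * vnorm (x i)) / lam_min2 Pm"
      using up pos unfolding Pm_def by (simp add: divide_right_mono)
    finally show "1 - (w0h \<bullet> w0s)\<^sup>2 \<le> 4 * (\<Sum>i=1..ks. vnorm (eps i) * vnorm (x i)) / lam_min2 (msum4 P {1..ks})"
      unfolding Pm_def t_def by (simp add: comm_scalar_prod[of w0s 4 w0h] wc w0sc)
  qed
  have part1: "sdr_tight l Q csq"
  proof -
    define kk where "kk = real ks"
    have kk2: "2 \<le> kk" using kk by (simp add: kk_def)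
    have zk: "kk \<le> zeta * (kk - 1)"
    proof -
      have "kk / (kk - 1) \<le> zeta" using A1 by (simp add: kk_def)
      thus ?thesis using kk2 by (simp add: divide_le_eq mult.commute)
    qed
    define c1 where "c1 = 1 / (zeta * (kk - 1))"
    define bt where "bt = 1 / kk - c1"
    have zk_pos: "0 < zeta * (kk - 1)" using zeta_pos kk2 by simp
    have c1_nn: "0 \<le> c1" using zk_pos by (simp add: c1_def)
    have bt_nn: "0 \<le> bt"
    proof -
      have "1 / (zeta * (kk - 1)) \<le> 1 / kk" using zk kk2 by (intro divide_left_mono) auto
      thus ?thesis by (simp add: bt_def c1_def)
    qed
    have cz: "c1 * zeta = 1 / (kk - 1)" using zeta_pos kk2 by (simp add: c1_def field_simps)
    have coef: "kk * c1 + bt * kk = 1" using kk2 by (simp add: bt_def field_simps)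
    have kpos: "0 < kk" using kk2 by simp
    have Qc': "\<forall>i\<in>{1..l}. Q i \<in> carrier_mat 4 4" using Qc by auto
    have Qs': "\<forall>i\<in>{1..l}. \<forall>a<4. \<forall>b<4. Q i $$ (a,b) = Q i $$ (b,a)" using Qsym symm_entry by blast
    define pr where "pr = (\<lambda>v. v - (w0h \<bullet> v) \<cdot>\<^sub>v w0h)"
    have prc: "pr v \<in> carrier_vec 4" if "v \<in> carrier_vec 4" for v using that wc by (simp add: pr_def)
    have prw: "pr v \<bullet> w0h = 0" if "v \<in> carrier_vec 4" for v using decomp(2)[OF that wc ww] by (simp add: pr_def)
    have vdec: "v = pr v + (w0h \<bullet> v) \<cdot>\<^sub>v w0h" if "v \<in> carrier_vec 4" for v using decomp(1)[OF that wc ww] by (simp add: pr_def)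
    have vsplit: "v \<bullet> (A *\<^sub>v v) = pr v \<bullet> (A *\<^sub>v pr v) + 2 * (w0h \<bullet> v) * (pr v \<bullet> (A *\<^sub>v w0h)) + (w0h \<bullet> v)^2 * (w0h \<bullet> (A *\<^sub>v w0h))"
      and vnsplit: "v \<bullet> v = pr v \<bullet> pr v + (w0h \<bullet> v)^2"
      if "symm 4 A" "v \<in> carrier_vec 4" for A v
    proof -
      define u where "u = pr v"
      define t where "t = w0h \<bullet> v"
      have e: "v = u + t \<cdot>\<^sub>v w0h" using vdec[OF that(2)] by (simp add: u_def t_def)
      have uc: "u \<in> carrier_vec 4" using prc[OF that(2)] by (simp add: u_def)
      have uw: "u \<bullet> w0h = 0" using prw[OF that(2)] by (simp add: u_def)
      show "v \<bullet> (A *\<^sub>v v) = pr v \<bullet> (A *\<^sub>v pr v) + 2 * (w0h \<bullet> v) * (pr v \<bullet> (A *\<^sub>v w0h)) + (w0h \<bullet> v)^2 * (w0h \<bullet> (A *\<^sub>v w0h))"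
        unfolding u_def[symmetric] t_def[symmetric] using qf_expand[OF that(1) uc wc, of t] e by simp
      show "v \<bullet> v = pr v \<bullet> pr v + (w0h \<bullet> v)^2"
        unfolding u_def[symmetric] t_def[symmetric] using norm_expand[OF uc wc, of t] e uw ww by simp
    qed
    have dform: "d i = lam / kk - q i + c1 * lam_max (msum4 (\<lambda>j. Q i - Q j) ({1..ks} - {i}))" for i
      unfolding d_def lam_q q_def kk_def c1_def by simp
    define Gm where "Gm = (\<lambda>i. c1 \<cdot>\<^sub>m S + (bt * kk) \<cdot>\<^sub>m Q i + (- (lam / kk)) \<cdot>\<^sub>m 1\<^sub>m 4)"
    define Vm where "Vm = (\<lambda>i. Pim w0h * Gm i * Pim w0h)"
    define Am where "Am = (\<lambda>i. Q i - csq i \<cdot>\<^sub>m 1\<^sub>m 4)"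
    define Tm where "Tm = (\<lambda>i. Vm i - Am i)"
    have Gsym: "symm 4 (Gm i)" if "i \<in> {1..l}" for i
      unfolding Gm_def by (intro symm_add symm_smult Ssym Qsym[OF that] symm_one)
    have Gc: "Gm i \<in> carrier_mat 4 4" if "i \<in> {1..l}" for i using symm_carrier[OF Gsym[OF that]] .
    have Gqf: "u \<bullet> (Gm i *\<^sub>v u) = c1 * (u \<bullet> (S *\<^sub>v u)) + bt * kk * (u \<bullet> (Q i *\<^sub>v u)) - lam / kk * (u \<bullet> u)"
      if "i \<in> {1..l}" "u \<in> carrier_vec 4" for i u
      unfolding Gm_def using Sc Qc[OF that(1)] that(2) by (simp add: qf_add qf_msmult)
    have Vsym: "symm 4 (Vm i)" if "i \<in> {1..l}" for i unfolding Vm_def by (rule transpose_sandwich[OF wc Gsym[OF that]])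
    have Vc: "Vm i \<in> carrier_mat 4 4" if "i \<in> {1..l}" for i using symm_carrier[OF Vsym[OF that]] .
    have Vqf: "v \<bullet> (Vm i *\<^sub>v v) = c1 * (pr v \<bullet> (S *\<^sub>v pr v)) + bt * kk * (pr v \<bullet> (Q i *\<^sub>v pr v)) - lam / kk * (pr v \<bullet> pr v)"
      if "i \<in> {1..l}" "v \<in> carrier_vec 4" for i v
      using sandwich_qf[OF wc Gc[OF that(1)] that(2)] Gqf[OF that(1) prc[OF that(2)]] by (simp add: Vm_def pr_def)
    have Vpsd: "0 \<le> v \<bullet> (Vm i *\<^sub>v v)" if "i \<in> {1..ks}" "v \<in> carrier_vec 4" for i v
    proof -
      have i: "i \<in> {1..l}" using that kl by auto
      have "zeta * lam * (pr v \<bullet> pr v) \<le> pr v \<bullet> (S *\<^sub>v pr v)"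
        using S2[OF prc[OF that(2)] prw[OF that(2)]] l2 by simp
      thus ?thesis unfolding Vqf[OF i that(2)]
        by (intro v_arith[OF c1_nn bt_nn kk2 Qpsd[OF i prc[OF that(2)]] sp_self_nonneg lam_nn _ cz])
    qed
    have Amsym: "symm 4 (Am i)" if "i \<in> {1..l}" for i unfolding Am_def by (intro symm_minus Qsym[OF that] symm_smult symm_one)
    have Amc: "Am i \<in> carrier_mat 4 4" if "i \<in> {1..l}" for i using symm_carrier[OF Amsym[OF that]] .
    have Amqf: "v \<bullet> (Am i *\<^sub>v v) = v \<bullet> (Q i *\<^sub>v v) - csq i * (v \<bullet> v)" if "i \<in> {1..l}" "v \<in> carrier_vec 4" for i v
      unfolding Am_def using qf_minus[OF Qc[OF that(1)] _ that(2), of "csq i \<cdot>\<^sub>m 1\<^sub>m 4"] qf_msmult[of "1\<^sub>m 4" v "csq i"] that(2) by simp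
    have Am_entry: "Am i $$ (a,b) = Af Q csq i a b" if "i \<in> {1..l}" "a < 4" "b < 4" for i a b
      unfolding Am_def Af_def using Qc[OF that(1)] that(2,3) by simp
    have Tsym: "symm 4 (Tm i)" if "i \<in> {1..l}" for i unfolding Tm_def by (rule symm_minus[OF Vsym[OF that] Amsym[OF that]])
    have Tqf: "v \<bullet> (Tm i *\<^sub>v v) = v \<bullet> (Vm i *\<^sub>v v) - v \<bullet> (Am i *\<^sub>v v)" if "i \<in> {1..l}" "v \<in> carrier_vec 4" for i v
      unfolding Tm_def by (rule qf_minus[OF Vc[OF that(1)] Amc[OF that(1)] that(2)])
    have Tpsd: "0 \<le> v \<bullet> (Tm i *\<^sub>v v)" if "i \<in> {1..ks}" "v \<in> carrier_vec 4" for i v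
    proof -
      have i: "i \<in> {1..l}" using that kl by auto
      define M where "M = msum4 (\<lambda>j. Q i - Q j) ({1..ks} - {i})"
      have Msym: "symm 4 M" unfolding M_def
        by (rule msum4_symm) (use Qsym kl i in \<open>auto intro!: symm_minus\<close>)
      define u where "u = pr v"
      define t where "t = w0h \<bullet> v"
      have uc: "u \<in> carrier_vec 4" unfolding u_def by (rule prc[OF that(2)])
      have Mqf: "u \<bullet> (M *\<^sub>v u) = kk * (u \<bullet> (Q i *\<^sub>v u)) - u \<bullet> (S *\<^sub>v u)"
      proof -
        have "u \<bullet> (M *\<^sub>v u) = (\<Sum>j\<in>{1..ks} - {i}. u \<bullet> ((Q i - Q j) *\<^sub>v u))"
          unfolding M_def by (rule msum4_qf) (use Qc kl uc i in \<open>auto intro!: minus_carrier_mat\<close>)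
        also have "\<dots> = (\<Sum>j\<in>{1..ks} - {i}. u \<bullet> (Q i *\<^sub>v u) - u \<bullet> (Q j *\<^sub>v u))"
        proof (rule sum.cong[OF refl])
          fix j assume "j \<in> {1..ks} - {i}"
          hence j: "j \<in> {1..l}" using kl by auto
          show "u \<bullet> ((Q i - Q j) *\<^sub>v u) = u \<bullet> (Q i *\<^sub>v u) - u \<bullet> (Q j *\<^sub>v u)"
            by (rule qf_minus[OF Qc[OF i] Qc[OF j] uc])
        qed
        also have "\<dots> = real (card ({1..ks} - {i})) * (u \<bullet> (Q i *\<^sub>v u)) - (\<Sum>j\<in>{1..ks} - {i}. u \<bullet> (Q j *\<^sub>v u))"
          by (simp add: sum_subtractf)
        also have "card ({1..ks} - {i}) = ks - 1" using that(1) by simp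
        also have "(\<Sum>j\<in>{1..ks} - {i}. u \<bullet> (Q j *\<^sub>v u)) = (\<Sum>j\<in>{1..ks}. u \<bullet> (Q j *\<^sub>v u)) - u \<bullet> (Q i *\<^sub>v u)"
          using that(1) by (simp add: sum_diff1)
        also have "(\<Sum>j\<in>{1..ks}. u \<bullet> (Q j *\<^sub>v u)) = u \<bullet> (S *\<^sub>v u)" using Sqf[OF uc] by simp
        finally show ?thesis using kk2 ks by (simp add: kk_def of_nat_diff algebra_simps)
      qed
      have Mle: "kk * (u \<bullet> (Q i *\<^sub>v u)) - u \<bullet> (S *\<^sub>v u) \<le> lam_max M * (vnorm u)^2"
        using lam_max_ge[OF Msym _ uc] Mqf vnorm_sq[of u] by simp
      have qw: "\<bar>u \<bullet> (Q i *\<^sub>v w0h)\<bar> \<le> vnorm u * vnorm (Q i *\<^sub>v w0h)"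
        by (rule cs_abs[of _ 4]) (use uc Qc[OF i] wc in auto)
      have vQ: "v \<bullet> (Q i *\<^sub>v v) = u \<bullet> (Q i *\<^sub>v u) + 2 * t * (u \<bullet> (Q i *\<^sub>v w0h)) + t^2 * q i"
        using vsplit[OF Qsym[OF i] that(2)] by (simp add: u_def t_def q_def)
      have vv': "v \<bullet> v = (vnorm u)^2 + t^2" using vnsplit[OF Qsym[OF i] that(2)] vnorm_sq[of u] by (simp add: u_def t_def)
      have Vu: "v \<bullet> (Vm i *\<^sub>v v) = c1 * (u \<bullet> (S *\<^sub>v u)) + (1/kk - c1) * kk * (u \<bullet> (Q i *\<^sub>v u)) - lam / kk * (vnorm u)^2"
        using Vqf[OF i that(2)] vnorm_sq[of u] by (simp add: u_def bt_def)
      have "v \<bullet> (Tm i *\<^sub>v v) = (c1 * (u \<bullet> (S *\<^sub>v u)) + (1/kk - c1) * kk * (u \<bullet> (Q i *\<^sub>v u)) - lam / kk * (vnorm u)^2)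
          - (u \<bullet> (Q i *\<^sub>v u) + 2 * t * (u \<bullet> (Q i *\<^sub>v w0h)) + t^2 * q i) + csq i * ((vnorm u)^2 + t^2)"
        unfolding Tqf[OF i that(2)] Amqf[OF i that(2)] Vu vQ vv' by simp
      also have "0 \<le> \<dots>"
        by (rule cert_arith[OF vnorm_nonneg vnorm_nonneg qw c1_nn Mle kpos dform[of i, folded M_def] q_lt[OF that(1)]])
      finally show ?thesis by simp
    qed
    define Em where "Em = S - lam \<cdot>\<^sub>m 1\<^sub>m 4 - msum4 Vm {1..ks}"
    have VVsym: "symm 4 (msum4 Vm {1..ks})" by (rule msum4_symm) (use Vsym kl in auto)
    have Esym: "symm 4 Em" unfolding Em_def
      by (intro symm_minus Ssym symm_smult symm_one VVsym)
    have Eqf: "v \<bullet> (Em *\<^sub>v v) = 0" if "v \<in> carrier_vec 4" for v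
    proof -
      have c1m: "lam \<cdot>\<^sub>m 1\<^sub>m 4 \<in> carrier_mat 4 4" by simp
      have "v \<bullet> (Em *\<^sub>v v) = v \<bullet> (S *\<^sub>v v) - lam * (v \<bullet> v) - (\<Sum>i\<in>{1..ks}. v \<bullet> (Vm i *\<^sub>v v))"
        unfolding Em_def
        using qf_minus[OF minus_carrier_mat[OF c1m] msum4_carrier that, of S] qf_minus[OF Sc c1m that]
          qf_msmult[of "1\<^sub>m 4" v lam] msum4_qf[of "{1..ks}" Vm v] Vc kl that by auto
      also have "(\<Sum>i\<in>{1..ks}. v \<bullet> (Vm i *\<^sub>v v)) = (\<Sum>i\<in>{1..ks}. c1 * (pr v \<bullet> (S *\<^sub>v pr v)) + bt * kk * (pr v \<bullet> (Q i *\<^sub>v pr v)) - lam / kk * (pr v \<bullet> pr v))"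
        by (rule sum.cong[OF refl]) (use Vqf kl that in auto)
      also have "\<dots> = kk * c1 * (pr v \<bullet> (S *\<^sub>v pr v)) + bt * kk * (\<Sum>i\<in>{1..ks}. pr v \<bullet> (Q i *\<^sub>v pr v)) - lam * (pr v \<bullet> pr v)"
        using kpos by (simp add: sum.distrib sum_subtractf sum_distrib_left kk_def)
      also have "(\<Sum>i\<in>{1..ks}. pr v \<bullet> (Q i *\<^sub>v pr v)) = pr v \<bullet> (S *\<^sub>v pr v)" using Sqf[OF prc[OF that]] by simp
      also have "v \<bullet> (S *\<^sub>v v) = pr v \<bullet> (S *\<^sub>v pr v) + (w0h \<bullet> v)^2 * lam"
        using vsplit[OF Ssym that] Sw prw[OF that] wc ww prc[OF that] by simp
      also have "v \<bullet> v = pr v \<bullet> pr v + (w0h \<bullet> v)^2" using vnsplit[OF Ssym that] .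
      finally have h: "v \<bullet> (Em *\<^sub>v v) = pr v \<bullet> (S *\<^sub>v pr v) + (w0h \<bullet> v)^2 * lam - lam * (pr v \<bullet> pr v + (w0h \<bullet> v)^2) -
        (kk * c1 * (pr v \<bullet> (S *\<^sub>v pr v)) + bt * kk * (pr v \<bullet> (S *\<^sub>v pr v)) - lam * (pr v \<bullet> pr v))" .
      have "kk * c1 * (pr v \<bullet> (S *\<^sub>v pr v)) + bt * kk * (pr v \<bullet> (S *\<^sub>v pr v)) = (kk * c1 + bt * kk) * (pr v \<bullet> (S *\<^sub>v pr v))"
        by (simp add: algebra_simps)
      hence yy: "kk * c1 * (pr v \<bullet> (S *\<^sub>v pr v)) + bt * kk * (pr v \<bullet> (S *\<^sub>v pr v)) = pr v \<bullet> (S *\<^sub>v pr v)"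
        using coef by simp
      show ?thesis unfolding h using yy by (simp add: algebra_simps)
    qed
    have Opsd: "0 \<le> v \<bullet> (Am j *\<^sub>v v)" if "j \<in> {ks+1..l}" "v \<in> carrier_vec 4" for j v
    proof -
      have j: "j \<in> {1..l}" using that ks by auto
      have "lam_min (Q j) * (v \<bullet> v) \<le> v \<bullet> (Q j *\<^sub>v v)" by (rule lam_min_le[OF Qsym[OF j] _ that(2)]) simp
      moreover have "csq j < lam_min (Q j)" using A2 that(1) by auto
      moreover have "0 \<le> v \<bullet> v" by (rule sp_self_nonneg)
      ultimately have "csq j * (v \<bullet> v) \<le> v \<bullet> (Q j *\<^sub>v v)" by (meson less_imp_le mult_right_mono order_trans)
      thus ?thesis using Amqf[OF j that(2)] by simp
    qed
    have frob_cong: "frob M X = frob M' X" if "\<And>a b. a < 4 \<Longrightarrow> b < 4 \<Longrightarrow> M a b = M' a b" for M M' X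
      unfolding frob_def using that by (intro sum.cong refl) auto
    have frob_delta: "frob (\<lambda>a b. M a b + k * (if a = b then 1 else 0)) X = frob M X + k * (\<Sum>a<4::nat. X a a)" for M k X
    proof -
      have "frob (\<lambda>a b. M a b + k * (if a = b then 1 else 0)) X = frob M X + (\<Sum>a<4::nat. \<Sum>b<4::nat. k * (if a = b then 1 else 0) * X a b)"
        unfolding frob_def by (simp add: algebra_simps sum.distrib)
      also have "(\<Sum>a<4::nat. \<Sum>b<4::nat. k * (if a = b then 1 else 0) * X a b) = k * (\<Sum>a<4::nat. X a a)"
        unfolding sum4 by (simp add: algebra_simps)
      finally show ?thesis .
    qed
    have lower: "lam + cout \<le> relax_obj l Q csq W" if "sdr_feasible l W" for W
    proof -
      have Wc: "W \<in> carrier_mat (4*(l+1)) (4*(l+1))" and sy: "transpose_mat W = W" and p: "psd W"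
        and c: "relax_constr l W" using that unfolding sdr_feasible_def by auto
      define X0 where "X0 = (\<lambda>a b. W $$ (a,b))"
      define Xi where "Xi = (\<lambda>i a b. W $$ (4*i+a, 4*i+b))"
      have X0psd: "0 \<le> (\<Sum>a<4. \<Sum>b<4. x $ a * X0 a b * x $ b)" if "x \<in> carrier_vec 4" for x
        using psd_block[OF Wc p _ that, of 0] by (simp add: X0_def)
      have Xipsd: "0 \<le> (\<Sum>a<4. \<Sum>b<4. x $ a * Xi i a b * x $ b)" if "i \<in> {1..l}" "x \<in> carrier_vec 4" for i x
        using psd_block[OF Wc p _ that(2), of i] that(1) by (simp add: Xi_def)
      have Xdpsd: "0 \<le> (\<Sum>a<4. \<Sum>b<4. x $ a * (X0 a b - Xi i a b) * x $ b)" if "i \<in> {1..l}" "x \<in> carrier_vec 4" for i x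
        using psd_diff[OF Wc p sy c that] by (simp add: X0_def Xi_def)
      have tr: "(\<Sum>a<4::nat. X0 a a) = 1"
      proof -
        have "mtrace (blk W 0 0) = 1" using c unfolding relax_constr_def by simp
        moreover have "mtrace (blk W 0 0) = (\<Sum>a<4::nat. X0 a a)"
          unfolding mtrace_def by (intro sum.cong) (auto simp: blk_def X0_def)
        ultimately show ?thesis by simp
      qed
      have obj: "relax_obj l Q csq W = (\<Sum>i\<in>{1..l}. frob (Af Q csq i) (Xi i)) + (\<Sum>i\<in>{1..l}. csq i)"
        unfolding relax_obj_def obj_formula[OF Wc sy c Qc' Qs'] frob_def Xi_def ..
      have out: "0 \<le> frob (Af Q csq j) (Xi j)" if "j \<in> {ks+1..l}" for j
      proof -
        have j: "j \<in> {1..l}" using that ks by auto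
        have "0 \<le> frob (\<lambda>a b. Am j $$ (a,b)) (Xi j)"
          by (rule frob_psd[OF Amsym[OF j] Opsd[OF that] Xipsd[OF j]])
        also have "frob (\<lambda>a b. Am j $$ (a,b)) (Xi j) = frob (Af Q csq j) (Xi j)"
          by (rule frob_cong) (simp add: Am_entry[OF j])
        finally show ?thesis .
      qed
      have inl_i: "frob (Af Q csq i) X0 - frob (\<lambda>a b. Vm i $$ (a,b)) X0 \<le> frob (Af Q csq i) (Xi i)" if "i \<in> {1..ks}" for i
      proof -
        have i: "i \<in> {1..l}" using that kl by auto
        have T_entry: "Tm i $$ (a,b) = Vm i $$ (a,b) - Af Q csq i a b" if "a < 4" "b < 4" for a b
          unfolding Tm_def using Vc[OF i] Amc[OF i] that Am_entry[OF i that] by simp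
        have Tf: "frob (\<lambda>a b. Tm i $$ (a,b)) X = frob (\<lambda>a b. Vm i $$ (a,b)) X - frob (Af Q csq i) X" for X
        proof -
          have "frob (\<lambda>a b. Tm i $$ (a,b)) X = frob (\<lambda>a b. Vm i $$ (a,b) - Af Q csq i a b) X"
            by (rule frob_cong) (simp add: T_entry)
          thus ?thesis by (simp add: frob_diff)
        qed
        have e2: "frob (\<lambda>a b. Tm i $$ (a,b)) (Xi i) = frob (\<lambda>a b. Tm i $$ (a,b)) X0 - frob (\<lambda>a b. Tm i $$ (a,b)) (\<lambda>a b. X0 a b - Xi i a b)"
          by (simp add: frob_diff2)
        have p1: "0 \<le> frob (\<lambda>a b. Vm i $$ (a,b)) (Xi i)" by (rule frob_psd[OF Vsym[OF i] Vpsd[OF that] Xipsd[OF i]])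
        have p2: "0 \<le> frob (\<lambda>a b. Tm i $$ (a,b)) (\<lambda>a b. X0 a b - Xi i a b)"
          by (rule frob_psd[OF Tsym[OF i] Tpsd[OF that] Xdpsd[OF i]])
        show ?thesis using Tf[of "Xi i"] Tf[of X0] e2 p1 p2 by linarith
      qed
      have Eentry: "Em $$ (a,b) = (\<Sum>i\<in>{1..ks}. Af Q csq i a b) - (\<Sum>i\<in>{1..ks}. Vm i $$ (a,b)) - (lam - (\<Sum>i\<in>{1..ks}. csq i)) * (if a = b then 1 else 0)"
        if "a < 4" "b < 4" for a b
      proof -
        have "Em $$ (a,b) = S $$ (a,b) - lam * (if a = b then 1 else 0) - (\<Sum>i\<in>{1..ks}. Vm i $$ (a,b))"
          unfolding Em_def using that Sc msum4_index[OF that, of Vm] carrier_matD[OF msum4_carrier[of Vm "{1..ks}"]]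
          by (simp add: minus_carrier_mat)
        moreover have "S $$ (a,b) = (\<Sum>i\<in>{1..ks}. Q i $$ (a,b))" unfolding S_def by (rule msum4_index[OF that])
        moreover have "(\<Sum>i\<in>{1..ks}. Af Q csq i a b) = (\<Sum>i\<in>{1..ks}. Q i $$ (a,b)) - (\<Sum>i\<in>{1..ks}. csq i) * (if a = b then 1 else 0)"
          unfolding Af_def by (simp add: sum_subtractf sum_distrib_right)
        ultimately show ?thesis by (simp add: algebra_simps)
      qed
      have "(\<Sum>i\<in>{1..ks}. frob (Af Q csq i) X0 - frob (\<lambda>a b. Vm i $$ (a,b)) X0)
            = frob (\<lambda>a b. (\<Sum>i\<in>{1..ks}. Af Q csq i a b) - (\<Sum>i\<in>{1..ks}. Vm i $$ (a,b))) X0"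
        by (simp add: frob_diff frob_sum sum_subtractf)
      also have "\<dots> = frob (\<lambda>a b. Em $$ (a,b) + (lam - (\<Sum>i\<in>{1..ks}. csq i)) * (if a = b then 1 else 0)) X0"
        by (rule frob_cong) (simp add: Eentry)
      also have "\<dots> = frob (\<lambda>a b. Em $$ (a,b)) X0 + (lam - (\<Sum>i\<in>{1..ks}. csq i))"
        using frob_delta tr by simp
      finally have sumE: "(\<Sum>i\<in>{1..ks}. frob (Af Q csq i) X0 - frob (\<lambda>a b. Vm i $$ (a,b)) X0)
            = frob (\<lambda>a b. Em $$ (a,b)) X0 + (lam - (\<Sum>i\<in>{1..ks}. csq i))" .
      have Epsd: "0 \<le> frob (\<lambda>a b. Em $$ (a,b)) X0"
        by (rule frob_psd[OF Esym _ X0psd]) (simp add: Eqf)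
      have inl: "lam - (\<Sum>i\<in>{1..ks}. csq i) \<le> (\<Sum>i\<in>{1..ks}. frob (Af Q csq i) (Xi i))"
        using sum_mono[of "{1..ks}" "\<lambda>i. frob (Af Q csq i) X0 - frob (\<lambda>a b. Vm i $$ (a,b)) X0" "\<lambda>i. frob (Af Q csq i) (Xi i)", OF inl_i]
          sumE Epsd by linarith
      have outs: "0 \<le> (\<Sum>j\<in>{ks+1..l}. frob (Af Q csq j) (Xi j))" by (rule sum_nonneg) (use out in auto)
      show ?thesis unfolding obj split[of "\<lambda>i. frob (Af Q csq i) (Xi i)"] split[of csq] cout_def
        using inl outs by linarith
    qed
    define wh where "wh = vec (4*(l+1)) (\<lambda>r. if r div 4 \<le> ks then w0h $ (r mod 4) else 0)"
    have whc: "wh \<in> carrier_vec (4*(l+1))" by (simp add: wh_def)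
    have wh_blk: "wh $ (4*i+a) = (if i \<le> ks then w0h $ a else 0)" if "i \<le> l" "a < 4" for i a
      using that by (simp add: wh_def)
    have outer_entry: "outer wh $$ (r,s) = wh $ r * wh $ s" if "r < 4*(l+1)" "s < 4*(l+1)" for r s
      using that whc by (simp add: outer_def)
    have whcon: "relax_constr l (outer wh)"
      unfolding relax_constr_def
    proof (intro conjI ballI)
      fix i assume i: "i \<in> {1..l}"
      show "blk (outer wh) 0 i = blk (outer wh) i i"
      proof (rule eq_matI)
        fix a b assume "a < dim_row (blk (outer wh) i i)" "b < dim_col (blk (outer wh) i i)"
        hence ab: "a < 4" "b < 4" by (auto simp: blk_def)
        have "blk (outer wh) 0 i $$ (a,b) = wh $ a * wh $ (4*i+b)"
          using ab i outer_entry[of a "4*i+b"] by (simp add: blk_def)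
        also have "\<dots> = wh $ (4*i+a) * wh $ (4*i+b)"
          using wh_blk[of 0 a] wh_blk[of i a] wh_blk[of i b] ab i by auto
        also have "\<dots> = blk (outer wh) i i $$ (a,b)" using ab i outer_entry[of "4*i+a" "4*i+b"] by (simp add: blk_def)
        finally show "blk (outer wh) 0 i $$ (a,b) = blk (outer wh) i i $$ (a,b)" .
      qed (auto simp: blk_def)
    next
      have "mtrace (blk (outer wh) 0 0) = (\<Sum>a<4::nat. wh $ a * wh $ a)"
        unfolding mtrace_def by (intro sum.cong) (use outer_entry in \<open>auto simp: blk_def\<close>)
      also have "\<dots> = (\<Sum>a<4::nat. w0h $ a * w0h $ a)" using wh_blk[of 0] by simp
      also have "\<dots> = 1" using ww wc by (simp add: sp_comp[of _ 4])
      finally show "mtrace (blk (outer wh) 0 0) = 1" .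
    qed
    have whfeas: "qcqp_feasible l wh" unfolding qcqp_feasible_def using whc whcon by simp
    have sdr_of: "sdr_feasible l (outer \<omega>)" if "qcqp_feasible l \<omega>" for \<omega>
    proof -
      have oc: "\<omega> \<in> carrier_vec (4*(l+1))" and rc: "relax_constr l (outer \<omega>)" using that unfolding qcqp_feasible_def by auto
      have "outer \<omega> \<in> carrier_mat (4*(l+1)) (4*(l+1))" using outer_carrier[of \<omega>] oc by simp
      moreover have "psd (outer \<omega>)" unfolding psd_def
      proof
        fix v :: "real vec" assume "v \<in> carrier_vec (dim_row (outer \<omega>))"
        hence "v \<in> carrier_vec (dim_vec \<omega>)" by (simp add: outer_def)
        thus "0 \<le> v \<bullet> (outer \<omega> *\<^sub>v v)" using outer_qf by simp
      qed
      ultimately show ?thesis unfolding sdr_feasible_def using rc outer_transpose by simp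
    qed
    have objh: "relax_obj l Q csq (outer wh) = lam + cout"
    proof -
      have Wc: "outer wh \<in> carrier_mat (4*(l+1)) (4*(l+1))" using outer_carrier[of wh] whc by simp
      have "relax_obj l Q csq (outer wh) = (\<Sum>i\<in>{1..l}. \<Sum>a<4. \<Sum>b<4. Af Q csq i a b * outer wh $$ (4*i+a, 4*i+b)) + (\<Sum>i\<in>{1..l}. csq i)"
        unfolding relax_obj_def obj_formula[OF Wc outer_transpose whcon Qc' Qs'] ..
      also have "(\<Sum>i\<in>{1..l}. \<Sum>a<4. \<Sum>b<4. Af Q csq i a b * outer wh $$ (4*i+a, 4*i+b))
          = (\<Sum>i\<in>{1..l}. if i \<le> ks then q i - csq i else 0)"
      proof (rule sum.cong[OF refl])
        fix i assume i: "i \<in> {1..l}"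
        show "(\<Sum>a<4. \<Sum>b<4. Af Q csq i a b * outer wh $$ (4*i+a, 4*i+b)) = (if i \<le> ks then q i - csq i else 0)"
        proof (cases "i \<le> ks")
          case True
          have "(\<Sum>a<4. \<Sum>b<4. Af Q csq i a b * outer wh $$ (4*i+a, 4*i+b)) = (\<Sum>a<4. \<Sum>b<4. w0h $ a * Am i $$ (a,b) * w0h $ b)"
          proof (intro sum.cong refl)
            fix a b assume "a \<in> {..<4::nat}" "b \<in> {..<4::nat}"
            hence ab: "a < 4" "b < 4" by auto
            have "outer wh $$ (4*i+a, 4*i+b) = w0h $ a * w0h $ b"
              using outer_entry[of "4*i+a" "4*i+b"] wh_blk[of i a] wh_blk[of i b] ab i True by auto
            thus "Af Q csq i a b * outer wh $$ (4*i+a, 4*i+b) = w0h $ a * Am i $$ (a,b) * w0h $ b"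
              using Am_entry[OF i ab] by simp
          qed
          also have "\<dots> = w0h \<bullet> (Am i *\<^sub>v w0h)" using qf4[OF Amc[OF i] wc] by simp
          also have "\<dots> = q i - csq i" using Amqf[OF i wc] ww by (simp add: q_def)
          finally show ?thesis using True by simp
        next
          case False
          have "outer wh $$ (4*i+a, 4*i+b) = 0" if "a < 4" "b < 4" for a b
            using outer_entry[of "4*i+a" "4*i+b"] wh_blk[of i a] that i False by auto
          thus ?thesis using False by simp
        qed
      qed
      also have "\<dots> = (\<Sum>i\<in>{1..ks}. q i - csq i)"
        unfolding split[of "\<lambda>i. if i \<le> ks then q i - csq i else 0"] by simp
      also have "(\<Sum>i\<in>{1..ks}. q i - csq i) + (\<Sum>i\<in>{1..l}. csq i) = lam + cout"
        unfolding split[of csq] lam_q cout_def by (simp add: sum_subtractf)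
      finally show ?thesis .
    qed
    have g1: "qcqp_global_min l Q csq wh"
      unfolding qcqp_global_min_def using whfeas objh lower sdr_of by auto
    have g2: "sdr_global_min l Q csq (outer \<omega>)" if "qcqp_global_min l Q csq \<omega>" for \<omega>
    proof -
      have f: "qcqp_feasible l \<omega>" and m: "relax_obj l Q csq (outer \<omega>) \<le> relax_obj l Q csq (outer wh)"
        using that whfeas unfolding qcqp_global_min_def by auto
      show ?thesis unfolding sdr_global_min_def using sdr_of[OF f] m objh lower by fastforce
    qed
    show ?thesis unfolding sdr_tight_def using g1 g2 by blast
  qed
  show ?thesis using part1 part2 by blast
qed

end
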